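(* Let $f\in\mathcal{F}$, let $\mathcal{D}$ be a probability distribution on $\Gamma$, and assume $\alpha+3\beta>1$ and the no-explosion assumption (constant $K$). For $\epsilon\in(0,1]$ and $\delta\in(0,1)$ let $$M=\max\left\{\left(\frac{\big(2C_d\|f\|_{\mathcal{F}}(1+\sqrt{2\log\frac1\delta})\big)^2}{\epsilon}\right)^{\frac1{2\alpha+4\beta+1}},\left(\frac{C_d'}{\epsilon}\right)^{\frac1{\alpha+3\beta-1}},\left(\frac{\|f\|_{\mathcal{F}}}{\epsilon}\right)^{\frac1{2\alpha+5\beta-1}},\left(\frac{\|f\|_{\mathcal{F}}^2}{\epsilon}\right)^{\frac1{2\alpha+4\beta}}\right\},$$ with $C_d=2d^{5/2}+4d^2+26d^{3/2}+12d$, $C_d'=4d^{5/2}+12d^2+60d^{3/2}+76d+24d^{1/2}$, and $$T_0=C_f\min\left\{\frac{m^{\frac{1+3\alpha+\beta}2}}{\epsilon^{3/4}},\frac{m^{\frac{1+5\alpha+3\beta}3}}{\epsilon^{2/3}},\frac{m^{\frac{2+4\alpha}3}}{\epsilon^{2/3}},\frac{m^{2\alpha+2\beta}}{\epsilon^{1/2}},\frac{m^{-1+3\alpha+5\beta}}{\epsilon},\frac{m^{\frac{2+5\alpha+2\beta}3}}{\epsilon^{2/3}},\frac{m^{\frac{1+4\alpha+3\beta}2}}{\epsilon^{1/2}},\frac{m^{1+2\alpha+\beta}}{\epsilon^{1/2}}\right\},$$ where $C_f:=\frac{1}{(\|f\|_{\mathcal{F}}+1)^2\max\{\|f\|_{\mathcal{F}},1\}}$.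 Suppose $m\ge M$ and $T_0>\|f\|_{\mathcal{F}}^2/\epsilon^2$. Let the number of iterations satisfy $T\in[\|f\|_{\mathcal{F}}^2/\epsilon^2,T_0]$ and the learning rate satisfy $\eta=\Theta(\epsilon/m)$ (i.e. $c_1\epsilon/m\le\eta\le c_2\epsilon/m$ for fixed constants $0<c_1\le c_2$). Then with probability at least $1-\delta$ over the random initialization, $$\mathbb{E}_X\,\mathbb{E}_{sgd}\left[\frac1T\sum_{t=0}^{T-1}\mathcal{L}_\Psi(X;W_t)\right]\le O(\epsilon),$$ where $\mathbb{E}_X$ is the expectation over the training set $X$ ($N$ i.i.d. samples from $\mathcal{D}$), $\mathbb{E}_{sgd}$ is the expectation over the random choices ${\bm x}^{(t)}\sim\mathcal{U}(X)$ of SGD, and the constant in $O(\epsilon)$ depends only on $d$, $K$, $c_1$, $c_2$ (in particular not on $N$).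
   Context: Fix an integer $d\ge1$ and let $\Gamma=\{{\bm x}\in\mathbb{R}^d:\|{\bm x}\|_2\le1\}$. Fix exponents $\alpha,\beta\ge0$ and a width $m\in\mathbb{N}^+$. Random initialization: for $i=1,\dots,m$, independently, $a_i^{(0)}\sim\mathcal{U}(-m^{-\alpha},m^{-\alpha})$, ${\bm w}_i^{(0)}\in\mathbb{R}^d$ has i.i.d. coordinates $\sim\mathcal{U}(-m^{-\beta},m^{-\beta})$, and $b_i^{(0)}\sim\mathcal{U}(-m^{-\beta},m^{-\beta})$. Let $\Lambda:=[-m^{-\alpha},m^{-\alpha}]\times[-m^{-\beta},m^{-\beta}]^d\times[-m^{-\beta},m^{-\beta}]$, $p(\theta)=|\Lambda|^{-1}\mathbb{I}_{\theta\in\Lambda}$. For $\theta=(a,{\bm w},b)\in\Lambda$, ${\bm x}\in\Gamma$: ${\bm\zeta}({\bm x};\theta)=a\big(2d({\bm w}^\top{\bm x}+b)^2+12({\bm w}^\top{\bm x})({\bm w}^\top{\bm x}+b)+6({\bm w}^\top{\bm w})(\|{\bm x}\|_2^2-1)\big){\bm x}\,\mathbb{I}_{{\bm w}^\top{\bm x}+b\ge0}$. $\mathcal{F}$ is the class of $f:\Gamma\to\mathbb{R}$ with $f({\bm x})=\int_\Lambda{\bm\alpha}(\theta)^\top{\bm\zeta}({\bm x};\theta)\,{\rm d}\theta$ for some ${\bm\alpha}:\Lambda\to\mathbb{R}^d$, normed by $\|f\|_{\mathcal{F}}:=\inf_{{\bm\alpha}}\max_{\theta\in\Lambda}\|{\bm\alpha}(\theta)\|_2/p(\theta)$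 (infimum assumed attained). PINN: for $W=[{\bm w}_1~\dots~{\bm w}_m]$, ${\bm w}_i\in\mathbb{R}^d$ (only the ${\bm w}_i$ are trainable; $a_i^{(0)},b_i^{(0)}$ stay fixed), $$\psi({\bm x};W)=\sum_{i=1}^m a_i^{(0)}\Big(2d({\bm w}_i^\top{\bm x}+b_i^{(0)})^3+12({\bm w}_i^\top{\bm x}+b_i^{(0)})^2({\bm w}_i^\top{\bm x})+6({\bm w}_i^\top{\bm x}+b_i^{(0)})({\bm w}_i^\top{\bm w}_i)(\|{\bm x}\|_2^2-1)\Big)\mathbb{I}_{{\bm w}_i^\top{\bm x}+b_i^{(0)}\ge0}.$$ Loss: $\mathcal{L}(h({\bm x})):=|h({\bm x})-f({\bm x})|^2$. SGD: training set $X=\{{\bm x}_1,\dots,{\bm x}_N\}$ drawn i.i.d. from $\mathcal{D}$; $W^{(0)}=[{\bm w}_1^{(0)}~\dots~{\bm w}_m^{(0)}]$; for $t=1,\dots,T$, pick ${\bm x}^{(t)}$ uniformly from $X$ and set $W^{(t)}=W^{(t-1)}-\eta\nabla_W\mathcal{L}(\psi({\bm x}^{(t)};W^{(t-1)}))$; $W_t:=W^{(t)}-W^{(0)}$, ${\bm w}_i^{(t)}$ the $i$-th column of $W^{(t)}$. Training loss: $\mathcal{L}_\Psi(X;W):=\frac1N\sum_{n=1}^N\mathcal{L}(\psi({\bm x}_n;W^{(0)}+W))$. No-explosion assumption: there is a constant $K\ge1$, independent of $m,\eta,t,T,N$, such that $\|{\bm w}_i^{(t)}\|_2\le K$ and $|\psi({\bm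 x};W^{(t)})|\le K$ for all $i$, all $t\in\{0,\dots,T\}$ and all ${\bm x}\in\Gamma$. *)

theory Defs
  imports "HOL-Probability.Probability"
begin

text \<open>Dimension d = CARD('d); points of R^d are of type real^'d.
  A neuron parameter theta = (a, w, b) has type real \<times> real^'d \<times> real.\<close>

type_synonym 'd param = "real \<times> (real^'d) \<times> real"

definition dim_d :: "'d::finite itself \<Rightarrow> real" where
  "dim_d _ = real CARD('d)"

definition Gamma :: "(real^'d::finite) set" where
  "Gamma = {x. norm x \<le> 1}"

definition Lambda :: "real \<Rightarrow> real \<Rightarrow> nat \<Rightarrow> ('d::finite) param set" where
  "Lambda al be m = {(a, w, b). \<bar>a\<bar> \<le> real m powr (-al) \<and>
      (\<forall>j. \<bar>w $ j\<bar> \<le> real m powr (-be)) \<and> \<bar>b\<bar> \<le> real m powr (-be)}"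

definition pdens :: "real \<Rightarrow> real \<Rightarrow> nat \<Rightarrow> ('d::finite) param \<Rightarrow> real" where
  "pdens al be m \<theta> = (if \<theta> \<in> Lambda al be m then 1 / measure lborel (Lambda al be m :: 'd param set) else 0)"

definition zeta :: "(real^'d::finite) \<Rightarrow> 'd param \<Rightarrow> real^'d" where
  "zeta x \<theta> = (case \<theta> of (a, w, b) \<Rightarrow>
     (if w \<bullet> x + b \<ge> 0 then
        (a * (2 * dim_d TYPE('d) * (w \<bullet> x + b)^2 + 12 * (w \<bullet> x) * (w \<bullet> x + b)
              + 6 * (w \<bullet> w) * ((norm x)^2 - 1))) *\<^sub>R x
      else 0))"

definition F_rep :: "real \<Rightarrow> real \<Rightarrow> nat \<Rightarrow> ((real^'d::finite) \<Rightarrow> real) \<Rightarrow> ('d param \<Rightarrow> real^'d) \<Rightarrow> bool" where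
  "F_rep al be m f A \<longleftrightarrow> (\<forall>x\<in>Gamma.
      set_integrable lborel (Lambda al be m) (\<lambda>\<theta>. A \<theta> \<bullet> zeta x \<theta>) \<and>
      f x = (\<integral>\<theta>\<in>Lambda al be m. A \<theta> \<bullet> zeta x \<theta> \<partial>lborel))"

definition F_cost :: "real \<Rightarrow> real \<Rightarrow> nat \<Rightarrow> ('d::finite param \<Rightarrow> real^'d) \<Rightarrow> real" where
  "F_cost al be m A = (SUP \<theta>\<in>Lambda al be m. norm (A \<theta>) / pdens al be m \<theta>)"

definition F_admissible :: "real \<Rightarrow> real \<Rightarrow> nat \<Rightarrow> ((real^'d::finite) \<Rightarrow> real) \<Rightarrow> ('d param \<Rightarrow> real^'d) \<Rightarrow> bool" where
  "F_admissible al be m f A \<longleftrightarrow> F_rep al be m f A \<and>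
      bdd_above ((\<lambda>\<theta>. norm (A \<theta>) / pdens al be m \<theta>) ` Lambda al be m)"

definition in_F :: "real \<Rightarrow> real \<Rightarrow> nat \<Rightarrow> ((real^'d::finite) \<Rightarrow> real) \<Rightarrow> bool" where
  "in_F al be m f \<longleftrightarrow> (\<exists>A. F_admissible al be m f A)"

definition F_norm :: "real \<Rightarrow> real \<Rightarrow> nat \<Rightarrow> ((real^'d::finite) \<Rightarrow> real) \<Rightarrow> real" where
  "F_norm al be m f = Inf {F_cost al be m A | A. F_admissible al be m f A}"

definition init_measure :: "real \<Rightarrow> real \<Rightarrow> nat \<Rightarrow> (nat \<Rightarrow> ('d::finite) param) measure" where
  "init_measure al be m = PiM {..<m} (\<lambda>_. uniform_measure lborel (Lambda al be m))"

definition W0 :: "(nat \<Rightarrow> ('d::finite) param) \<Rightarrow> nat \<Rightarrow> real^'d" where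
  "W0 th i = fst (snd (th i))"

text \<open>PINN psi(x;W), with a_i = a_i^(0), b_i = b_i^(0) fixed.\<close>
definition psi :: "nat \<Rightarrow> (nat \<Rightarrow> ('d::finite) param) \<Rightarrow> (nat \<Rightarrow> real^'d) \<Rightarrow> real^'d \<Rightarrow> real" where
  "psi m th W x = (\<Sum>i<m. let a = fst (th i); b = snd (snd (th i)); w = W i; z = w \<bullet> x + b in
      (if z \<ge> 0 then a * (2 * dim_d TYPE('d) * z^3 + 12 * z^2 * (w \<bullet> x)
                    + 6 * z * (w \<bullet> w) * ((norm x)^2 - 1)) else 0))"

text \<open>Gradient of psi w.r.t. w_i (indicator treated as locally constant, as for ReLU).\<close>
definition grad_psi :: "(nat \<Rightarrow> ('d::finite) param) \<Rightarrow> (nat \<Rightarrow> real^'d) \<Rightarrow> real^'d \<Rightarrow> nat \<Rightarrow> real^'d" where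
  "grad_psi th W x i = (let a = fst (th i); b = snd (snd (th i)); w = W i;
       u = w \<bullet> x; z = u + b; s = w \<bullet> w; r = (norm x)^2 - 1 in
     (if z \<ge> 0 then
        (a * (6 * dim_d TYPE('d) * z^2 + 24 * z * u + 12 * z^2 + 6 * s * r)) *\<^sub>R x
        + (a * 12 * z * r) *\<^sub>R w
      else 0))"

definition sgd_step :: "nat \<Rightarrow> (nat \<Rightarrow> ('d::finite) param) \<Rightarrow> (real^'d \<Rightarrow> real) \<Rightarrow> real
    \<Rightarrow> (nat \<Rightarrow> real^'d) \<Rightarrow> real^'d \<Rightarrow> nat \<Rightarrow> real^'d" where
  "sgd_step m th f \<eta> W x = (\<lambda>i. W i - (\<eta> * 2 * (psi m th W x - f x)) *\<^sub>R grad_psi th W x i)"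

text \<open>W^(t); the sample used in step t+1 is X (js t).\<close>
primrec sgd :: "nat \<Rightarrow> (nat \<Rightarrow> ('d::finite) param) \<Rightarrow> (real^'d \<Rightarrow> real) \<Rightarrow> real
    \<Rightarrow> (nat \<Rightarrow> real^'d) \<Rightarrow> (nat \<Rightarrow> nat) \<Rightarrow> nat \<Rightarrow> nat \<Rightarrow> real^'d" where
  "sgd m th f \<eta> X js 0 = W0 th"
| "sgd m th f \<eta> X js (Suc t) = sgd_step m th f \<eta> (sgd m th f \<eta> X js t) (X (js t))"

definition train_loss :: "nat \<Rightarrow> (nat \<Rightarrow> ('d::finite) param) \<Rightarrow> (real^'d \<Rightarrow> real) \<Rightarrow> nat
    \<Rightarrow> (nat \<Rightarrow> real^'d) \<Rightarrow> (nat \<Rightarrow> real^'d) \<Rightarrow> real" where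
  "train_loss m th f N X W = (1 / real N) * (\<Sum>n<N. (psi m th W (X n) - f (X n))^2)"

definition E_sgd :: "nat \<Rightarrow> (nat \<Rightarrow> ('d::finite) param) \<Rightarrow> (real^'d \<Rightarrow> real) \<Rightarrow> real
    \<Rightarrow> nat \<Rightarrow> nat \<Rightarrow> (nat \<Rightarrow> real^'d) \<Rightarrow> real" where
  "E_sgd m th f \<eta> N T X = (\<Sum>js\<in>{..<T} \<rightarrow>\<^sub>E {..<N}.
       (1 / real T) * (\<Sum>t<T. train_loss m th f N X (sgd m th f \<eta> X js t))) / real N ^ T"

definition E_X_sgd :: "nat \<Rightarrow> (nat \<Rightarrow> ('d::finite) param) \<Rightarrow> (real^'d \<Rightarrow> real) \<Rightarrow> real
    \<Rightarrow> nat \<Rightarrow> nat \<Rightarrow> (real^'d) measure \<Rightarrow> real" where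
  "E_X_sgd m th f \<eta> N T D = (\<integral>X. E_sgd m th f \<eta> N T X \<partial>(PiM {..<N} (\<lambda>_. D)))"

definition C_d :: "real \<Rightarrow> real" where
  "C_d d = 2 * d powr (5/2) + 4 * d^2 + 26 * d powr (3/2) + 12 * d"

definition C_d' :: "real \<Rightarrow> real" where
  "C_d' d = 4 * d powr (5/2) + 12 * d^2 + 60 * d powr (3/2) + 76 * d + 24 * d powr (1/2)"

definition M_bound :: "real \<Rightarrow> real \<Rightarrow> real \<Rightarrow> real \<Rightarrow> real \<Rightarrow> real \<Rightarrow> real" where
  "M_bound d al be nf \<epsilon> \<delta> = Max {
     ((2 * C_d d * nf * (1 + sqrt (2 * ln (1 / \<delta>))))^2 / \<epsilon>) powr (1 / (2*al + 4*be + 1)),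
     (C_d' d / \<epsilon>) powr (1 / (al + 3*be - 1)),
     (nf / \<epsilon>) powr (1 / (2*al + 5*be - 1)),
     (nf^2 / \<epsilon>) powr (1 / (2*al + 4*be))}"

definition T0_bound :: "real \<Rightarrow> real \<Rightarrow> real \<Rightarrow> real \<Rightarrow> real \<Rightarrow> real" where
  "T0_bound m al be nf \<epsilon> = (1 / ((nf + 1)^2 * max nf 1)) * Min {
     m powr ((1 + 3*al + be) / 2) / \<epsilon> powr (3/4),
     m powr ((1 + 5*al + 3*be) / 3) / \<epsilon> powr (2/3),
     m powr ((2 + 4*al) / 3) / \<epsilon> powr (2/3),
     m powr (2*al + 2*be) / \<epsilon> powr (1/2),
     m powr (-1 + 3*al + 5*be) / \<epsilon>,
     m powr ((2 + 5*al + 2*be) / 3) / \<epsilon> powr (2/3),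
     m powr ((1 + 4*al + 3*be) / 2) / \<epsilon> powr (1/2),
     m powr (1 + 2*al + be) / \<epsilon> powr (1/2)}"

end

theory Submission
  imports Defs
begin


lemma h_bound:
  fixes d z u S \<rho> Y :: real
  assumes "d \<ge> 0" "\<bar>z\<bar> \<le> Y" "\<bar>u\<bar> \<le> Y" "0 \<le> S" "S \<le> Y^2" "\<bar>\<rho>\<bar> \<le> 1"
  shows "\<bar>2*d*z^3 + 12*z^2*u + 6*z*S*\<rho>\<bar> \<le> (2*d+18) * Y^2 * \<bar>z\<bar>"
proof -
  have Y0: "0 \<le> Y" using assms(2) by linarith
  have z2: "z^2 \<le> Y^2" using assms(2) by (metis abs_le_square_iff abs_of_nonneg Y0)
  have "\<bar>2*d*z^3\<bar> = 2*d*z^2*\<bar>z\<bar>" using assms(1) by (simp add: abs_mult power3_eq_cube power2_eq_square)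
  also have "\<dots> \<le> 2*d*Y^2*\<bar>z\<bar>" using z2 assms(1) by (simp add: mult_mono mult_right_mono)
  finally have 1: "\<bar>2*d*z^3\<bar> \<le> 2*d*Y^2*\<bar>z\<bar>" .
  have "\<bar>12*z^2*u\<bar> = 12*\<bar>z\<bar>*(\<bar>z\<bar>*\<bar>u\<bar>)" by (simp add: abs_mult power2_eq_square)
  also have "\<dots> \<le> 12*\<bar>z\<bar>*(Y*Y)" using assms(2,3) Y0 by (intro mult_left_mono mult_mono) auto
  finally have 2: "\<bar>12*z^2*u\<bar> \<le> 12*Y^2*\<bar>z\<bar>" by (simp add: power2_eq_square mult.commute mult.left_commute)
  have "\<bar>6*z*S*\<rho>\<bar> = 6*\<bar>z\<bar>*(S*\<bar>\<rho>\<bar>)" using assms(4) by (simp add: abs_mult)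
  also have "\<dots> \<le> 6*\<bar>z\<bar>*(Y^2*1)" using assms(4,5,6) by (intro mult_left_mono mult_mono) auto
  finally have 3: "\<bar>6*z*S*\<rho>\<bar> \<le> 6*Y^2*\<bar>z\<bar>" by (simp add: mult.commute mult.left_commute)
  have "\<bar>2*d*z^3 + 12*z^2*u + 6*z*S*\<rho>\<bar> \<le> \<bar>2*d*z^3\<bar> + \<bar>12*z^2*u\<bar> + \<bar>6*z*S*\<rho>\<bar>" by linarith
  also have "\<dots> \<le> (2*d+18) * Y^2 * \<bar>z\<bar>" using 1 2 3 by (simp add: algebra_simps)
  finally show ?thesis .
qed

lemma h_lip:
  fixes d z u S z' u' S' \<rho> Y D :: real
  assumes "d \<ge> 0" "\<bar>z\<bar> \<le> Y" "\<bar>u\<bar> \<le> Y" "0 \<le> S" "S \<le> Y^2" "\<bar>\<rho>\<bar> \<le> 1"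
    "\<bar>z'\<bar> \<le> Y" "\<bar>u'\<bar> \<le> Y" "0 \<le> S'" "S' \<le> Y^2"
    "\<bar>z - z'\<bar> \<le> D" "\<bar>u - u'\<bar> \<le> D" "\<bar>S - S'\<bar> \<le> 2*Y*D"
  shows "\<bar>(2*d*z^3 + 12*z^2*u + 6*z*S*\<rho>) - (2*d*z'^3 + 12*z'^2*u' + 6*z'*S'*\<rho>)\<bar> \<le> (6*d+54) * Y^2 * D"
proof -
  have Y0: "0 \<le> Y" using assms(2) by linarith
  have D0: "0 \<le> D" using assms(11) by linarith
  have e1: "z^3 - z'^3 = (z - z')*(z*z + z*z' + z'*z')" by (simp add: algebra_simps power3_eq_cube)
  have "\<bar>z*z + z*z' + z'*z'\<bar> \<le> \<bar>z\<bar>*\<bar>z\<bar> + \<bar>z\<bar>*\<bar>z'\<bar> + \<bar>z'\<bar>*\<bar>z'\<bar>" by (simp add: abs_mult[symmetric] abs_triangle_ineq order_trans[OF abs_triangle_ineq])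
  also have "\<dots> \<le> Y*Y + Y*Y + Y*Y" using assms(2,7) by (intro add_mono mult_mono) auto
  finally have q1: "\<bar>z*z + z*z' + z'*z'\<bar> \<le> 3*Y^2" by (simp add: power2_eq_square)
  have "\<bar>z^3 - z'^3\<bar> \<le> D * (3*Y^2)" unfolding e1 abs_mult using assms(11) q1 D0 by (intro mult_mono) auto
  hence t1: "\<bar>2*d*(z^3 - z'^3)\<bar> \<le> 2*d*(D*(3*Y^2))" using assms(1) by (simp add: abs_mult) (metis mult.commute mult.left_commute mult_left_mono)
  have e2: "z^2*u - z'^2*u' = (z - z')*((z+z')*u) + z'*z'*(u - u')" by (simp add: algebra_simps power2_eq_square)
  have "\<bar>(z+z')*u\<bar> \<le> (Y+Y)*Y" unfolding abs_mult using assms(2,3,7) Y0 by (intro mult_mono) auto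
  hence a2: "\<bar>(z - z')*((z+z')*u)\<bar> \<le> D*((Y+Y)*Y)" unfolding abs_mult[of "z-z'"] using assms(11) D0 by (intro mult_mono) auto
  have "\<bar>z'*z'*(u - u')\<bar> \<le> Y*Y*D" unfolding abs_mult using assms(7,12) Y0 by (intro mult_mono) auto
  hence t2: "\<bar>z^2*u - z'^2*u'\<bar> \<le> 3*Y^2*D" unfolding e2 using a2 by (simp add: power2_eq_square algebra_simps)
  have e3: "z*S - z'*S' = (z - z')*S + z'*(S - S')" by (simp add: algebra_simps)
  have "\<bar>(z - z')*S\<bar> \<le> D*Y^2" unfolding abs_mult using assms(11,4,5) D0 by (intro mult_mono) auto
  moreover have "\<bar>z'*(S - S')\<bar> \<le> Y*(2*Y*D)" unfolding abs_mult using assms(7,13) Y0 by (intro mult_mono) auto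
  ultimately have t3': "\<bar>z*S - z'*S'\<bar> \<le> 3*Y^2*D" unfolding e3 by (simp add: power2_eq_square algebra_simps)
  have t3: "\<bar>(z*S - z'*S')*\<rho>\<bar> \<le> 3*Y^2*D" unfolding abs_mult using t3' assms(6)
    by (metis abs_ge_zero mult_left_le order_trans)
  have eq: "(2*d*z^3 + 12*z^2*u + 6*z*S*\<rho>) - (2*d*z'^3 + 12*z'^2*u' + 6*z'*S'*\<rho>)
     = 2*d*(z^3 - z'^3) + 12*(z^2*u - z'^2*u') + 6*((z*S - z'*S')*\<rho>)" by (simp add: algebra_simps)
  show ?thesis unfolding eq using t1 t2 t3 by (simp add: algebra_simps)
qed

definition nt :: "real \<Rightarrow> real \<Rightarrow> real^'d::finite \<Rightarrow> real^'d \<Rightarrow> real" where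
  "nt a b w x = (if w \<bullet> x + b \<ge> 0 then a * (2 * dim_d TYPE('d) * (w \<bullet> x + b)^3 + 12 * (w \<bullet> x + b)^2 * (w \<bullet> x)
                    + 6 * (w \<bullet> x + b) * (w \<bullet> w) * ((norm x)^2 - 1)) else 0)"

lemma psi_nt: "psi m th W x = (\<Sum>i<m. nt (fst (th i)) (snd (snd (th i))) (W i) x)"
  unfolding psi_def nt_def Let_def by simp

lemma dim_d_ge: "dim_d TYPE('d::finite) \<ge> 1"
  unfolding dim_d_def by simp

lemma basic_bounds:
  fixes w x :: "real^'d::finite"
  assumes "norm w + \<bar>b\<bar> \<le> Y" "norm x \<le> 1"
  shows "\<bar>w \<bullet> x + b\<bar> \<le> Y" "\<bar>w \<bullet> x\<bar> \<le> Y" "0 \<le> w \<bullet> w" "w \<bullet> w \<le> Y^2"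
    "\<bar>(norm x)^2 - 1\<bar> \<le> 1" "norm w \<le> Y" "0 \<le> Y"
proof -
  have a: "\<bar>w \<bullet> x\<bar> \<le> norm w"
    using Cauchy_Schwarz_ineq2[of w x] assms(2) by (metis mult_left_le norm_ge_zero order_trans)
  then show "\<bar>w \<bullet> x + b\<bar> \<le> Y" "\<bar>w \<bullet> x\<bar> \<le> Y" using assms(1) by linarith+
  show "0 \<le> w \<bullet> w" by simp
  show nw: "norm w \<le> Y" using assms(1) by linarith
  show "0 \<le> Y" using assms(1) by (metis abs_ge_zero add_nonneg_nonneg norm_ge_zero order_trans)
  have "w \<bullet> w = (norm w)^2" by (simp add: power2_norm_eq_inner)
  then show "w \<bullet> w \<le> Y^2" using nw by (simp add: power_mono)
  have "(norm x)^2 \<le> 1" using assms(2) by (simp add: power_le_one)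
  then show "\<bar>(norm x)^2 - 1\<bar> \<le> 1" by simp
qed

abbreviation cc :: "'d::finite itself \<Rightarrow> real" where "cc t \<equiv> 6 * dim_d t + 54"

lemma nt_bound:
  fixes w x :: "real^'d::finite"
  assumes "norm w + \<bar>b\<bar> \<le> Y" "norm x \<le> 1"
  shows "\<bar>nt a b w x\<bar> \<le> \<bar>a\<bar> * cc TYPE('d) * Y^3"
proof (cases "w \<bullet> x + b \<ge> 0")
  case True
  note B = basic_bounds[OF assms]
  have d0: "dim_d TYPE('d) \<ge> 0" using dim_d_ge[where 'd='d] by linarith
  have "\<bar>2 * dim_d TYPE('d) * (w \<bullet> x + b)^3 + 12 * (w \<bullet> x + b)^2 * (w \<bullet> x)
                    + 6 * (w \<bullet> x + b) * (w \<bullet> w) * ((norm x)^2 - 1)\<bar> \<le> (2*dim_d TYPE('d)+18) * Y^2 * \<bar>w \<bullet> x + b\<bar>"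
    by (rule h_bound[OF d0 B(1,2,3,4,5)])
  also have "\<dots> \<le> (2*dim_d TYPE('d)+18) * Y^2 * Y" using B d0 by (intro mult_left_mono) auto
  also have "\<dots> = (2*dim_d TYPE('d)+18) * Y^3" by (simp add: power3_eq_cube power2_eq_square)
  also have "\<dots> \<le> cc TYPE('d) * Y^3" using B d0 by (intro mult_right_mono) auto
  finally show ?thesis using True unfolding nt_def by (simp add: abs_mult mult_left_mono mult.assoc)
next
  case False
  then show ?thesis using basic_bounds[OF assms] dim_d_ge[where 'd='d] unfolding nt_def by simp
qed

lemma nt_lip:
  fixes w w' x :: "real^'d::finite"
  assumes "norm w + \<bar>b\<bar> \<le> Y" "norm w' + \<bar>b\<bar> \<le> Y" "norm x \<le> 1"
  shows "\<bar>nt a b w x - nt a b w' x\<bar> \<le> \<bar>a\<bar> * cc TYPE('d) * Y^2 * norm (w - w')"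
proof -
  note B = basic_bounds[OF assms(1,3)]
  note B' = basic_bounds[OF assms(2,3)]
  have d0: "dim_d TYPE('d) \<ge> 0" using dim_d_ge[where 'd='d] by linarith
  define D where "D = norm (w - w')"
  have dx: "\<bar>(w \<bullet> x + b) - (w' \<bullet> x + b)\<bar> \<le> D" "\<bar>w \<bullet> x - w' \<bullet> x\<bar> \<le> D"
  proof -
    have "\<bar>(w - w') \<bullet> x\<bar> \<le> D" unfolding D_def
      using Cauchy_Schwarz_ineq2[of "w - w'" x] assms(3) by (metis mult_left_le norm_ge_zero order_trans)
    then show "\<bar>(w \<bullet> x + b) - (w' \<bullet> x + b)\<bar> \<le> D" "\<bar>w \<bullet> x - w' \<bullet> x\<bar> \<le> D" by (simp_all add: inner_diff_left)
  qed
  have dS: "\<bar>w \<bullet> w - w' \<bullet> w'\<bar> \<le> 2 * Y * D"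
  proof -
    have "w \<bullet> w - w' \<bullet> w' = (w - w') \<bullet> (w + w')" by (simp add: algebra_simps inner_commute)
    hence "\<bar>w \<bullet> w - w' \<bullet> w'\<bar> \<le> D * norm (w + w')" unfolding D_def using Cauchy_Schwarz_ineq2 by metis
    also have "\<dots> \<le> D * (Y + Y)" using B(6) B'(6) norm_triangle_ineq[of w w'] unfolding D_def
      by (intro mult_left_mono) auto
    finally show ?thesis by (simp add: mult.commute)
  qed
  let ?z = "w \<bullet> x + b" and ?z' = "w' \<bullet> x + b"
  let ?h = "2 * dim_d TYPE('d) * ?z^3 + 12 * ?z^2 * (w \<bullet> x) + 6 * ?z * (w \<bullet> w) * ((norm x)^2 - 1)"
  let ?h' = "2 * dim_d TYPE('d) * ?z'^3 + 12 * ?z'^2 * (w' \<bullet> x) + 6 * ?z' * (w' \<bullet> w') * ((norm x)^2 - 1)"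
  have D0: "0 \<le> D" unfolding D_def by simp
  have main: "\<bar>(if ?z \<ge> 0 then ?h else 0) - (if ?z' \<ge> 0 then ?h' else 0)\<bar> \<le> cc TYPE('d) * Y^2 * D"
  proof (cases "?z \<ge> 0"; cases "?z' \<ge> 0")
    assume "?z \<ge> 0" "?z' \<ge> 0"
    then show ?thesis using h_lip[OF d0 B(1,2,3,4,5) B'(1,2,3,4) dx dS] by simp
  next
    assume a: "?z \<ge> 0" "\<not> ?z' \<ge> 0"
    have "\<bar>?h\<bar> \<le> (2*dim_d TYPE('d)+18) * Y^2 * \<bar>?z\<bar>" by (rule h_bound[OF d0 B(1,2,3,4,5)])
    also have "\<dots> \<le> (2*dim_d TYPE('d)+18) * Y^2 * D" using a dx(1) d0 by (intro mult_left_mono) auto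
    also have "\<dots> \<le> cc TYPE('d) * Y^2 * D" using d0 D0 by (intro mult_right_mono) auto
    finally show ?thesis using a by simp
  next
    assume a: "\<not> ?z \<ge> 0" "?z' \<ge> 0"
    have "\<bar>?h'\<bar> \<le> (2*dim_d TYPE('d)+18) * Y^2 * \<bar>?z'\<bar>" by (rule h_bound[OF d0 B'(1,2,3,4,5)])
    also have "\<dots> \<le> (2*dim_d TYPE('d)+18) * Y^2 * D" using a dx(1) d0 by (intro mult_left_mono) auto
    also have "\<dots> \<le> cc TYPE('d) * Y^2 * D" using d0 D0 by (intro mult_right_mono) auto
    finally show ?thesis using a by simp
  next
    assume a: "\<not> ?z \<ge> 0" "\<not> ?z' \<ge> 0"
    then show ?thesis using d0 D0 by simp
  qed
  have "nt a b w x - nt a b w' x = a * ((if ?z \<ge> 0 then ?h else 0) - (if ?z' \<ge> 0 then ?h' else 0))"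
    unfolding nt_def by (simp add: algebra_simps)
  then show ?thesis using main unfolding D_def[symmetric]
    by (simp add: abs_mult mult_left_mono mult.assoc)
qed

lemma grad_bound:
  fixes x :: "real^'d::finite"
  assumes "norm (W i) + \<bar>snd (snd (th i))\<bar> \<le> Y" "norm x \<le> 1"
  shows "norm (grad_psi th W x i) \<le> \<bar>fst (th i)\<bar> * cc TYPE('d) * Y^2"
proof -
  note B = basic_bounds[OF assms]
  have d0: "dim_d TYPE('d) \<ge> 0" using dim_d_ge[where 'd='d] by linarith
  define z where "z = W i \<bullet> x + snd (snd (th i))"
  define u where "u = W i \<bullet> x"
  define S where "S = W i \<bullet> W i"
  define \<rho> where "\<rho> = (norm x)^2 - 1"
  define a where "a = fst (th i)"
  have z: "\<bar>z\<bar> \<le> Y" and u: "\<bar>u\<bar> \<le> Y" and S: "0 \<le> S" "S \<le> Y^2" and r: "\<bar>\<rho>\<bar> \<le> 1" and Y0: "0 \<le> Y"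
    and nw: "norm (W i) \<le> Y"
    using B unfolding z_def u_def S_def \<rho>_def by auto
  have z2: "z^2 \<le> Y^2" using z Y0 by (metis abs_le_square_iff abs_of_nonneg)
  have "\<bar>6 * dim_d TYPE('d) * z^2 + 24 * z * u + 12 * z^2 + 6 * S * \<rho>\<bar>
      \<le> 6 * dim_d TYPE('d) * z^2 + 24 * (\<bar>z\<bar> * \<bar>u\<bar>) + 12 * z^2 + 6 * (S * \<bar>\<rho>\<bar>)"
  proof -
    have "\<bar>6 * dim_d TYPE('d) * z^2 + 24 * z * u + 12 * z^2 + 6 * S * \<rho>\<bar>
      \<le> \<bar>6 * dim_d TYPE('d) * z^2\<bar> + \<bar>24 * z * u\<bar> + \<bar>12 * z^2\<bar> + \<bar>6 * S * \<rho>\<bar>" by linarith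
    also have "\<dots> = 6 * dim_d TYPE('d) * z^2 + 24 * (\<bar>z\<bar> * \<bar>u\<bar>) + 12 * z^2 + 6 * (S * \<bar>\<rho>\<bar>)"
      using d0 S by (simp add: abs_mult)
    finally show ?thesis .
  qed
  also have "\<dots> \<le> 6 * dim_d TYPE('d) * Y^2 + 24 * (Y * Y) + 12 * Y^2 + 6 * (Y^2 * 1)"
    using d0 z u S r z2 Y0 by (intro add_mono mult_left_mono mult_mono) auto
  finally have A: "\<bar>6 * dim_d TYPE('d) * z^2 + 24 * z * u + 12 * z^2 + 6 * S * \<rho>\<bar> \<le> (6 * dim_d TYPE('d) + 42) * Y^2"
    by (simp add: power2_eq_square algebra_simps)
  have "\<bar>12 * z * \<rho>\<bar> * norm (W i) \<le> 12 * Y * 1 * Y"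
    unfolding abs_mult using z r nw Y0 by (intro mult_mono) auto
  hence Bn: "\<bar>12 * z * \<rho>\<bar> * norm (W i) \<le> 12 * Y^2" by (simp add: power2_eq_square)
  show ?thesis
  proof (cases "z \<ge> 0")
    case True
    have g: "grad_psi th W x i = (a * (6 * dim_d TYPE('d) * z^2 + 24 * z * u + 12 * z^2 + 6 * S * \<rho>)) *\<^sub>R x
        + (a * 12 * z * \<rho>) *\<^sub>R W i"
      using True unfolding grad_psi_def Let_def z_def u_def S_def \<rho>_def a_def by simp
    have "norm (grad_psi th W x i) \<le> \<bar>a\<bar> * \<bar>6 * dim_d TYPE('d) * z^2 + 24 * z * u + 12 * z^2 + 6 * S * \<rho>\<bar> * norm x
        + \<bar>a\<bar> * (\<bar>12 * z * \<rho>\<bar> * norm (W i))"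
      unfolding g by (rule order_trans[OF norm_triangle_ineq]) (simp add: abs_mult mult.assoc)
    also have "\<dots> \<le> \<bar>a\<bar> * ((6 * dim_d TYPE('d) + 42) * Y^2) * 1 + \<bar>a\<bar> * (12 * Y^2)"
    proof (rule add_mono)
      show "\<bar>a\<bar> * (\<bar>12 * z * \<rho>\<bar> * norm (W i)) \<le> \<bar>a\<bar> * (12 * Y^2)" by (rule mult_left_mono[OF Bn]) simp
      show "\<bar>a\<bar> * \<bar>6 * dim_d TYPE('d) * z^2 + 24 * z * u + 12 * z^2 + 6 * S * \<rho>\<bar> * norm x
         \<le> \<bar>a\<bar> * ((6 * dim_d TYPE('d) + 42) * Y^2) * 1"
        using A assms(2) by (intro mult_mono mult_left_mono) auto
    qed
    also have "\<dots> = \<bar>a\<bar> * cc TYPE('d) * Y^2" by (simp add: algebra_simps)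
    finally show ?thesis unfolding a_def .
  next
    case False
    then show ?thesis unfolding grad_psi_def Let_def z_def using d0 by simp
  qed
qed

lemma cc_pos: "cc TYPE('d::finite) \<ge> 0"
  using dim_d_ge[where 'd='d] by linarith

lemma step_move:
  fixes x0 :: "real^'d::finite"
  assumes "norm (W i) + \<bar>snd (snd (th i))\<bar> \<le> Y" "norm x0 \<le> 1"
    "\<bar>psi m th W x0 - f x0\<bar> \<le> B" "\<eta> \<ge> 0" "\<bar>fst (th i)\<bar> \<le> r"
  shows "norm (sgd_step m th f \<eta> W x0 i - W i) \<le> \<eta>*2*B*r*cc TYPE('d)*Y^2"
proof -
  have g: "norm (grad_psi th W x0 i) \<le> r * cc TYPE('d) * Y^2"
    using grad_bound[of W i th Y x0, OF assms(1,2)] assms(5) cc_pos[where 'd='d]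
    by (meson mult_right_mono order_trans zero_le_power2 mult_nonneg_nonneg)
  have "norm (sgd_step m th f \<eta> W x0 i - W i) = \<bar>\<eta> * 2 * (psi m th W x0 - f x0)\<bar> * norm (grad_psi th W x0 i)"
    unfolding sgd_step_def by simp
  also have "\<dots> \<le> (\<eta> * 2 * B) * (r * cc TYPE('d) * Y^2)"
  proof (rule mult_mono)
    show "\<bar>\<eta> * 2 * (psi m th W x0 - f x0)\<bar> \<le> \<eta> * 2 * B"
      using assms(3,4) by (simp add: abs_mult mult_left_mono)
  qed (use g assms in auto)
  finally show ?thesis by (simp add: mult.assoc)
qed

lemma step_err:
  fixes x :: "real^'d::finite"
  assumes "\<forall>i<m. norm (W i) + \<bar>snd (snd (th i))\<bar> \<le> Y" "\<forall>i<m. norm (W' i) + \<bar>snd (snd (th i))\<bar> \<le> Y"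
    "\<forall>i<m. norm (W' i - W i) \<le> \<Delta>" "\<forall>i<m. \<bar>fst (th i)\<bar> \<le> r" "norm x \<le> 1"
  shows "\<bar>psi m th W' x - psi m th W x\<bar> \<le> real m * (r * cc TYPE('d) * Y^2 * \<Delta>)"
proof -
  have "\<bar>psi m th W' x - psi m th W x\<bar> = \<bar>\<Sum>i<m. nt (fst (th i)) (snd (snd (th i))) (W' i) x - nt (fst (th i)) (snd (snd (th i))) (W i) x\<bar>"
    unfolding psi_nt by (simp add: sum_subtractf)
  also have "\<dots> \<le> (\<Sum>i<m. \<bar>nt (fst (th i)) (snd (snd (th i))) (W' i) x - nt (fst (th i)) (snd (snd (th i))) (W i) x\<bar>)"
    by (rule sum_abs)
  also have "\<dots> \<le> (\<Sum>i<m. r * cc TYPE('d) * Y^2 * \<Delta>)"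
  proof (rule sum_mono)
    fix i assume i: "i \<in> {..<m}"
    have "\<bar>nt (fst (th i)) (snd (snd (th i))) (W' i) x - nt (fst (th i)) (snd (snd (th i))) (W i) x\<bar>
        \<le> \<bar>fst (th i)\<bar> * cc TYPE('d) * Y^2 * norm (W' i - W i)"
      using nt_lip[of "W' i" "snd (snd (th i))" Y "W i" x "fst (th i)"] assms i by auto
    also have "\<dots> \<le> r * cc TYPE('d) * Y^2 * \<Delta>"
      using assms(3,4) i cc_pos[where 'd='d] by (intro mult_mono mult_right_mono) auto
    finally show "\<bar>nt (fst (th i)) (snd (snd (th i))) (W' i) x - nt (fst (th i)) (snd (snd (th i))) (W i) x\<bar>
        \<le> r * cc TYPE('d) * Y^2 * \<Delta>" .
  qed
  also have "\<dots> = real m * (r * cc TYPE('d) * Y^2 * \<Delta>)" by simp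
  finally show ?thesis .
qed

lemma dyn_K:
  fixes X :: "nat \<Rightarrow> real^'d::finite"
  assumes ab: "\<forall>i<m. \<bar>fst (th i)\<bar> \<le> r"
    and Yb: "\<forall>t\<le>T. \<forall>i<m. norm (sgd m th f \<eta> X js t i) + \<bar>snd (snd (th i))\<bar> \<le> Y"
    and eta: "\<eta> \<ge> 0" and Xb: "\<forall>t<T. norm (X (js t)) \<le> 1"
    and E0: "\<forall>x::real^'d. norm x \<le> 1 \<longrightarrow> \<bar>psi m th (sgd m th f \<eta> X js 0) x - f x\<bar> \<le> E0"
    and qdef: "q = real m * (r * cc TYPE('d) * Y^2 * (\<eta>*2*r*cc TYPE('d)*Y^2))"
  shows "t \<le> T \<Longrightarrow> \<forall>x::real^'d. norm x \<le> 1 \<longrightarrow> \<bar>psi m th (sgd m th f \<eta> X js t) x - f x\<bar> \<le> E0 * (1+q)^t"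
proof (induction t)
  case 0
  then show ?case using E0 by simp
next
  case (Suc t)
  let ?W = "sgd m th f \<eta> X js t" and ?W' = "sgd m th f \<eta> X js (Suc t)"
  define B where "B = E0 * (1+q)^t"
  have IH: "\<forall>x::real^'d. norm x \<le> 1 \<longrightarrow> \<bar>psi m th ?W x - f x\<bar> \<le> B" using Suc unfolding B_def by simp
  have x0: "norm (X (js t)) \<le> 1" using Xb Suc.prems by simp
  have mv: "\<forall>i<m. norm (?W' i - ?W i) \<le> \<eta>*2*B*r*cc TYPE('d)*Y^2"
    using step_move[of ?W _ th Y "X (js t)" m f B \<eta> r] Yb Suc.prems x0 IH eta ab by simp
  show ?case
  proof (intro allI impI)
    fix x :: "real^'d" assume x: "norm x \<le> 1"
    have "\<bar>psi m th ?W' x - psi m th ?W x\<bar> \<le> real m * (r * cc TYPE('d) * Y^2 * (\<eta>*2*B*r*cc TYPE('d)*Y^2))"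
      by (rule step_err) (use Yb Suc.prems mv ab x in auto)
    also have "\<dots> = q * B" unfolding qdef by (simp add: algebra_simps)
    moreover have "\<bar>psi m th ?W x - f x\<bar> \<le> B" using IH x by blast
    ultimately have "\<bar>psi m th ?W' x - f x\<bar> \<le> B + q * B" by linarith
    then show "\<bar>psi m th ?W' x - f x\<bar> \<le> E0 * (1+q)^Suc t" unfolding B_def by (simp add: algebra_simps)
  qed
qed

lemma dyn_R:
  fixes X :: "nat \<Rightarrow> real^'d::finite"
  assumes ab: "\<forall>i<m. \<bar>fst (th i)\<bar> \<le> r"
    and Y0b: "\<forall>i<m. norm (sgd m th f \<eta> X js 0 i) + \<bar>snd (snd (th i))\<bar> + D \<le> Y"
    and eta: "\<eta> \<ge> 0" and Xb: "\<forall>t<T. norm (X (js t)) \<le> 1"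
    and E0: "\<forall>x::real^'d. norm x \<le> 1 \<longrightarrow> \<bar>psi m th (sgd m th f \<eta> X js 0) x - f x\<bar> \<le> E0"
    and qdef: "q = real m * (r * cc TYPE('d) * Y^2 * (\<eta>*2*r*cc TYPE('d)*Y^2))"
    and r0: "r \<ge> 0"
    and ddef: "\<delta> = \<eta>*2*(E0*(1+q)^T)*r*cc TYPE('d)*Y^2"
    and mvb: "real T * \<delta> \<le> D"
  shows "t \<le> T \<Longrightarrow> (\<forall>i<m. norm (sgd m th f \<eta> X js t i - sgd m th f \<eta> X js 0 i) \<le> real t * \<delta>) \<and>
     (\<forall>x::real^'d. norm x \<le> 1 \<longrightarrow> \<bar>psi m th (sgd m th f \<eta> X js t) x - f x\<bar> \<le> E0 * (1+q)^t)"
proof (induction t)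
  case 0
  then show ?case using E0 by simp
next
  case (Suc t)
  let ?V = "sgd m th f \<eta> X js 0"
  let ?W = "sgd m th f \<eta> X js t" and ?W' = "sgd m th f \<eta> X js (Suc t)"
  have E00: "E0 \<ge> 0"
  proof -
    have "\<bar>psi m th (sgd m th f \<eta> X js 0) 0 - f 0\<bar> \<le> E0" using E0 by simp
    then show ?thesis by linarith
  qed
  have q0: "q \<ge> 0" unfolding qdef using eta r0 cc_pos[where 'd='d] by simp
  have d0: "\<delta> \<ge> 0" unfolding ddef using eta r0 cc_pos[where 'd='d] E00 q0 by simp
  define B where "B = E0 * (1+q)^t"
  have tT: "t \<le> T" using Suc.prems by linarith
  note IHb = Suc.IH[OF tT]
  have IH1: "\<forall>i<m. norm (?W i - ?V i) \<le> real t * \<delta>" by (rule conjunct1[OF IHb])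
  have IH: "\<forall>x::real^'d. norm x \<le> 1 \<longrightarrow> \<bar>psi m th ?W x - f x\<bar> \<le> B" unfolding B_def by (rule conjunct2[OF IHb])
  have BB: "B \<le> E0*(1+q)^T" unfolding B_def using E00 q0 Suc.prems
    by (intro mult_left_mono power_increasing) auto
  have "real (Suc t) \<le> real T" using Suc.prems by linarith
  hence "real (Suc t) * \<delta> \<le> real T * \<delta>" using d0 by (rule mult_right_mono)
  hence t1D: "real (Suc t) * \<delta> \<le> D" using mvb by linarith
  have tD: "real t * \<delta> \<le> D" using t1D d0 by (simp add: algebra_simps)
  have Yb: "\<forall>i<m. norm (?W i) + \<bar>snd (snd (th i))\<bar> \<le> Y"
  proof (intro allI impI)
    fix i assume i: "i < m"
    have "norm (?W i) \<le> norm (?V i) + norm (?W i - ?V i)" by (rule norm_triangle_sub)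
    moreover have "norm (?W i - ?V i) \<le> real t * \<delta>" using IH1 i by blast
    moreover have "norm (?V i) + \<bar>snd (snd (th i))\<bar> + D \<le> Y" using Y0b i by blast
    ultimately show "norm (?W i) + \<bar>snd (snd (th i))\<bar> \<le> Y" using tD by linarith
  qed
  have x0: "norm (X (js t)) \<le> 1" using Xb Suc.prems by simp
  have mv0: "\<forall>i<m. norm (?W' i - ?W i) \<le> \<eta>*2*B*r*cc TYPE('d)*Y^2"
    using step_move[of ?W _ th Y "X (js t)" m f B \<eta> r] Yb x0 IH eta ab by simp
  have "\<eta>*2*B*r*cc TYPE('d)*Y^2 \<le> \<delta>" unfolding ddef using BB eta r0 cc_pos[where 'd='d]
    by (intro mult_right_mono mult_left_mono) auto
  hence mv: "\<forall>i<m. norm (?W' i - ?W i) \<le> \<delta>" using mv0 order_trans by blast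
  have M1: "\<forall>i<m. norm (?W' i - ?V i) \<le> real (Suc t) * \<delta>"
  proof (intro allI impI)
    fix i assume i: "i < m"
    have "norm (?W' i - ?V i) \<le> norm (?W' i - ?W i) + norm (?W i - ?V i)" by (rule norm_diff_triangle_le) auto
    moreover have "norm (?W' i - ?W i) \<le> \<delta>" using mv i by blast
    moreover have "norm (?W i - ?V i) \<le> real t * \<delta>" using IH1 i by blast
    ultimately show "norm (?W' i - ?V i) \<le> real (Suc t) * \<delta>" by (simp add: algebra_simps)
  qed
  have Yb': "\<forall>i<m. norm (?W' i) + \<bar>snd (snd (th i))\<bar> \<le> Y"
  proof (intro allI impI)
    fix i assume i: "i < m"
    have "norm (?W' i) \<le> norm (?V i) + norm (?W' i - ?V i)" by (rule norm_triangle_sub)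
    moreover have "norm (?W' i - ?V i) \<le> real (Suc t) * \<delta>" using M1 i by blast
    moreover have "norm (?V i) + \<bar>snd (snd (th i))\<bar> + D \<le> Y" using Y0b i by blast
    ultimately show "norm (?W' i) + \<bar>snd (snd (th i))\<bar> \<le> Y" using t1D by linarith
  qed
  have err: "\<forall>x::real^'d. norm x \<le> 1 \<longrightarrow> \<bar>psi m th ?W' x - f x\<bar> \<le> E0 * (1+q)^Suc t"
  proof (intro allI impI)
    fix x :: "real^'d" assume x: "norm x \<le> 1"
    have "\<bar>psi m th ?W' x - psi m th ?W x\<bar> \<le> real m * (r * cc TYPE('d) * Y^2 * (\<eta>*2*B*r*cc TYPE('d)*Y^2))"
      by (rule step_err) (use Yb Yb' mv0 ab x in auto)
    also have "\<dots> = q * B" unfolding qdef by (simp add: algebra_simps)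
    finally have "\<bar>psi m th ?W' x - psi m th ?W x\<bar> \<le> q * B" .
    moreover have "\<bar>psi m th ?W x - f x\<bar> \<le> B" using IH x by blast
    ultimately have "\<bar>psi m th ?W' x - f x\<bar> \<le> B + q * B" by linarith
    then show "\<bar>psi m th ?W' x - f x\<bar> \<le> E0 * (1+q)^Suc t" unfolding B_def by (simp add: algebra_simps)
  qed
  show ?case using M1 err by blast
qed



lemma Lambda_eq: "Lambda al be m = {a. \<bar>a\<bar> \<le> real m powr (-al)} \<times> ({w::real^'d::finite. \<forall>j. \<bar>w $ j\<bar> \<le> real m powr (-be)} \<times> {b. \<bar>b\<bar> \<le> real m powr (-be)})"
  unfolding Lambda_def by auto

lemma Lambda_closed: "closed (Lambda al be m :: 'd::finite param set)"
proof -
  have c1: "closed {a::real. \<bar>a\<bar> \<le> c}" for c by (intro closed_Collect_le continuous_intros)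
  have c2: "closed {w::real^'d. \<forall>j. \<bar>w $ j\<bar> \<le> c}" for c
  proof -
    have "{w::real^'d. \<forall>j. \<bar>w $ j\<bar> \<le> c} = (\<Inter>j. {w. \<bar>w $ j\<bar> \<le> c})" by auto
    also have "closed \<dots>" by (intro closed_INT ballI closed_Collect_le continuous_intros)
    finally show ?thesis .
  qed
  show ?thesis unfolding Lambda_eq by (intro closed_Times c1 c2)
qed

lemma Lambda_bounded: "bounded (Lambda al be m :: 'd::finite param set)"
proof -
  have b1: "bounded {a::real. \<bar>a\<bar> \<le> c}" for c unfolding bounded_iff by auto
  have b2: "bounded {w::real^'d. \<forall>j. \<bar>w $ j\<bar> \<le> c}" for c
    unfolding bounded_iff
  proof (intro exI ballI)
    fix w :: "real^'d" assume "w \<in> {w. \<forall>j. \<bar>w $ j\<bar> \<le> c}"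
    hence "\<forall>j. \<bar>w $ j\<bar> \<le> c" by simp
    have "norm w \<le> (\<Sum>j\<in>UNIV. \<bar>w $ j\<bar>)" by (rule norm_le_l1_cart)
    also have "\<dots> \<le> (\<Sum>j\<in>(UNIV::'d set). c)" using \<open>\<forall>j. \<bar>w $ j\<bar> \<le> c\<close> by (intro sum_mono) auto
    finally show "norm w \<le> real CARD('d) * c" by simp
  qed
  show ?thesis unfolding Lambda_eq by (intro bounded_Times b1 b2)
qed

lemma Lambda_sets: "Lambda al be m \<in> sets (lborel :: 'd::finite param measure)"
  using borel_closed[OF Lambda_closed] by simp

lemma Lambda_fin: "emeasure lborel (Lambda al be m :: 'd::finite param set) < \<infinity>"
  using Lambda_bounded emeasure_bounded_finite by blast

lemma Lambda_pos: "m \<ge> 1 \<Longrightarrow> 0 < emeasure lborel (Lambda al be m :: 'd::finite param set)"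
proof -
  define e where "e = min (real m powr (-al)) (real m powr (-be))"
  assume m1: "m \<ge> 1"
  have e0: "0 < e" unfolding e_def using m1 by simp
  have sub: "ball 0 e \<subseteq> (Lambda al be m :: 'd param set)"
  proof
    fix p :: "'d param" assume "p \<in> ball 0 e"
    then have n: "norm p < e" by simp
    obtain a w b where p: "p = (a, w, b)" by (cases p) auto
    have f1: "\<bar>a\<bar> \<le> norm p" unfolding p using norm_fst_le[of a "(w, b)"] by simp
    have f2: "norm (w, b) \<le> norm p" unfolding p by (rule norm_snd_le)
    have f3: "norm w \<le> norm (w, b)" by (rule norm_fst_le)
    have f4: "\<bar>b\<bar> \<le> norm (w, b)" using norm_snd_le[of b w] by simp
    have f5: "\<bar>w $ j\<bar> \<le> norm p" for j using component_le_norm_cart[of w j] f2 f3 by linarith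
    have n1: "norm p \<le> real m powr (-al)" "norm p \<le> real m powr (-be)" using n unfolding e_def by auto
    have "\<bar>a\<bar> \<le> real m powr (-al) \<and> (\<forall>j. \<bar>w $ j\<bar> \<le> real m powr (-be)) \<and> \<bar>b\<bar> \<le> real m powr (-be)"
      using f1 f2 f4 f5 n1 by (meson order_trans)
    then show "p \<in> Lambda al be m" unfolding p Lambda_def by blast
  qed
  have "0 < emeasure lborel (ball (0::'d param) e)"
    using e0 by (simp add: emeasure_ball unit_ball_vol_pos)
  also have "\<dots> \<le> emeasure lborel (Lambda al be m :: 'd param set)"
    using sub Lambda_sets by (intro emeasure_mono) auto
  finally show ?thesis .
qed



lemma zeta_bound:
  fixes x w :: "real^'d::finite"
  assumes "norm w + \<bar>b\<bar> \<le> Y" "norm x \<le> 1"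
  shows "norm (zeta x (a, w, b)) \<le> \<bar>a\<bar> * cc TYPE('d) * Y^2"
proof -
  note B = basic_bounds[OF assms]
  have d0: "dim_d TYPE('d) \<ge> 0" using dim_d_ge[where 'd='d] by linarith
  define z where "z = w \<bullet> x + b"
  define u where "u = w \<bullet> x"
  define S where "S = w \<bullet> w"
  define \<rho> where "\<rho> = (norm x)^2 - 1"
  have z: "\<bar>z\<bar> \<le> Y" and u: "\<bar>u\<bar> \<le> Y" and S: "0 \<le> S" "S \<le> Y^2" and r: "\<bar>\<rho>\<bar> \<le> 1" and Y0: "0 \<le> Y"
    using B unfolding z_def u_def S_def \<rho>_def by auto
  have z2: "z^2 \<le> Y^2" using z Y0 by (metis abs_le_square_iff abs_of_nonneg)
  have "\<bar>2 * dim_d TYPE('d) * z^2 + 12 * u * z + 6 * S * \<rho>\<bar>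
      \<le> \<bar>2 * dim_d TYPE('d) * z^2\<bar> + \<bar>12 * u * z\<bar> + \<bar>6 * S * \<rho>\<bar>" by linarith
  also have "\<dots> = 2 * dim_d TYPE('d) * z^2 + 12 * (\<bar>u\<bar> * \<bar>z\<bar>) + 6 * (S * \<bar>\<rho>\<bar>)"
    using d0 S by (simp add: abs_mult)
  also have "\<dots> \<le> 2 * dim_d TYPE('d) * Y^2 + 12 * (Y * Y) + 6 * (Y^2 * 1)"
    using d0 z u S r z2 Y0 by (intro add_mono mult_left_mono mult_mono) auto
  also have "\<dots> = (2 * dim_d TYPE('d) + 18) * Y^2" by (simp add: power2_eq_square algebra_simps)
  also have "\<dots> \<le> cc TYPE('d) * Y^2" using d0 by (intro mult_right_mono) auto
  finally have A: "\<bar>2 * dim_d TYPE('d) * z^2 + 12 * u * z + 6 * S * \<rho>\<bar> \<le> cc TYPE('d) * Y^2" .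
  show ?thesis
  proof (cases "z \<ge> 0")
    case True
    have "norm (zeta x (a, w, b)) = \<bar>a\<bar> * \<bar>2 * dim_d TYPE('d) * z^2 + 12 * u * z + 6 * S * \<rho>\<bar> * norm x"
      using True unfolding zeta_def z_def u_def S_def \<rho>_def by (simp add: abs_mult)
    also have "\<dots> \<le> \<bar>a\<bar> * (cc TYPE('d) * Y^2) * 1"
      using A assms(2) by (intro mult_mono mult_left_mono) auto
    finally show ?thesis by (simp add: mult.assoc)
  next
    case False
    then show ?thesis unfolding zeta_def z_def using d0 by simp
  qed
qed

lemma Lambda_Y:
  assumes "(a, w, b) \<in> Lambda al be m"
  shows "norm (w::real^'d::finite) + \<bar>b\<bar> \<le> (dim_d TYPE('d) + 1) * real m powr (-be)" "\<bar>a\<bar> \<le> real m powr (-al)"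
proof -
  have "norm w \<le> (\<Sum>j\<in>UNIV. \<bar>w $ j\<bar>)" by (rule norm_le_l1_cart)
  also have "\<dots> \<le> (\<Sum>j\<in>(UNIV::'d set). real m powr (-be))" using assms unfolding Lambda_def by (intro sum_mono) auto
  finally have "norm w \<le> dim_d TYPE('d) * real m powr (-be)" unfolding dim_d_def by simp
  then show "norm w + \<bar>b\<bar> \<le> (dim_d TYPE('d) + 1) * real m powr (-be)" using assms unfolding Lambda_def
    by (simp add: algebra_simps)
  show "\<bar>a\<bar> \<le> real m powr (-al)" using assms unfolding Lambda_def by simp
qed

lemma f_bound:
  fixes x :: "real^'d::finite"
  assumes m1: "m \<ge> 1" and adm: "F_admissible al be m f A" and x: "x \<in> Gamma"
  shows "\<bar>f x\<bar> \<le> F_cost al be m A * (real m powr (-al) * cc TYPE('d) * ((dim_d TYPE('d) + 1) * real m powr (-be))^2)"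
proof -
  let ?L = "Lambda al be m :: 'd param set"
  define \<mu> where "\<mu> = measure lborel ?L"
  define Z where "Z = real m powr (-al) * cc TYPE('d) * ((dim_d TYPE('d) + 1) * real m powr (-be))^2"
  define F where "F = F_cost al be m A"
  have fin: "emeasure lborel ?L \<noteq> \<infinity>" using Lambda_fin by (metis less_irrefl)
  have "ennreal (enn2real (emeasure lborel ?L)) = emeasure lborel ?L" by (rule ennreal_enn2real) (use Lambda_fin in simp)
  hence em: "emeasure lborel ?L = ennreal \<mu>" unfolding \<mu>_def measure_def by simp
  have "0 < emeasure lborel ?L" by (rule Lambda_pos[OF m1])
  hence "0 < ennreal \<mu>" using em by simp
  hence mu0: "\<mu> > 0" by simp
  have xn: "norm x \<le> 1" using x unfolding Gamma_def by simp
  have rep: "set_integrable lborel ?L (\<lambda>\<theta>. A \<theta> \<bullet> zeta x \<theta>)" "f x = (\<integral>\<theta>\<in>?L. A \<theta> \<bullet> zeta x \<theta> \<partial>lborel)"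
    using adm x unfolding F_admissible_def F_rep_def by auto
  have bdd: "bdd_above ((\<lambda>\<theta>. norm (A \<theta>) / pdens al be m \<theta>) ` ?L)" using adm unfolding F_admissible_def by simp
  have pt: "\<bar>A \<theta> \<bullet> zeta x \<theta>\<bar> \<le> F / \<mu> * Z" if th: "\<theta> \<in> ?L" for \<theta>
  proof -
    have "norm (A \<theta>) / pdens al be m \<theta> \<le> F" unfolding F_def F_cost_def by (rule cSUP_upper[OF th bdd])
    moreover have "pdens al be m \<theta> = 1 / \<mu>" unfolding pdens_def \<mu>_def using th by simp
    ultimately have "norm (A \<theta>) * \<mu> \<le> F" by simp
    hence nA: "norm (A \<theta>) \<le> F / \<mu>" using mu0 by (simp add: field_simps)
    obtain a w b where tp: "\<theta> = (a, w, b)" by (cases \<theta>) auto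
    note LY = Lambda_Y[OF th[unfolded tp]]
    have "norm (zeta x \<theta>) \<le> \<bar>a\<bar> * cc TYPE('d) * ((dim_d TYPE('d) + 1) * real m powr (-be))^2"
      unfolding tp by (rule zeta_bound[OF LY(1) xn])
    also have "\<dots> \<le> Z" unfolding Z_def using LY(2) cc_pos[where 'd='d] by (intro mult_right_mono) auto
    finally have nz: "norm (zeta x \<theta>) \<le> Z" .
    have "\<bar>A \<theta> \<bullet> zeta x \<theta>\<bar> \<le> norm (A \<theta>) * norm (zeta x \<theta>)" by (rule Cauchy_Schwarz_ineq2)
    also have "\<dots> \<le> F / \<mu> * Z" using nA nz by (intro mult_mono) (auto intro: order_trans[OF norm_ge_zero])
    finally show ?thesis .
  qed
  have ci: "set_integrable lborel ?L (\<lambda>_. F / \<mu> * Z)"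
    unfolding set_integrable_def using Lambda_sets fin
    by (intro integrable_scaleR_left integrable_real_indicator) (auto simp: less_top)
  have "\<bar>f x\<bar> = norm (\<integral>\<theta>\<in>?L. A \<theta> \<bullet> zeta x \<theta> \<partial>lborel)" using rep(2) by simp
  also have "\<dots> \<le> (\<integral>\<theta>\<in>?L. norm (A \<theta> \<bullet> zeta x \<theta>) \<partial>lborel)" by (rule set_integral_norm_bound[OF rep(1)])
  also have "\<dots> \<le> (\<integral>\<theta>\<in>?L. F / \<mu> * Z \<partial>lborel)"
    by (rule set_integral_mono[OF set_integrable_norm[OF rep(1)] ci]) (use pt in auto)
  also have "\<dots> = measure lborel ?L *\<^sub>R (F / \<mu> * Z)" by (rule set_integral_const[OF Lambda_sets fin])
  also have "\<dots> = \<mu> * (F / \<mu> * Z)" unfolding \<mu>_def by (simp only: real_scaleR_def)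
  also have "\<dots> = F * Z" using mu0 by simp
  finally show ?thesis unfolding F_def Z_def .
qed



definition GR :: "real \<Rightarrow> real \<Rightarrow> real" where "GR d c2 = 2*c2*(6*d+54)^2*(d+2)^4"
definition K1c :: "real \<Rightarrow> real \<Rightarrow> real" where "K1c d c2 = 2*c2*exp(GR d c2)*(6*d+54)*(d+2)^2"
definition Lam0 :: "real \<Rightarrow> real \<Rightarrow> real" where "Lam0 d c2 = 2*K1c d c2*(6*d+54)*(d+1)^3 + 1"
definition Lam :: "real \<Rightarrow> real \<Rightarrow> real" where "Lam d c2 = 2*K1c d c2*(6*d+54)*(d+1)^2 + 1"
definition GK :: "real \<Rightarrow> real \<Rightarrow> real \<Rightarrow> real" where "GK d c2 K = 2*c2*(6*d+54)^2*(K+1)^4*(Lam d c2 + Lam0 d c2)"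

lemma pow_exp_bound:
  fixes q :: real
  assumes "q \<ge> 0" "t \<le> T" "q * real T \<le> G"
  shows "(1+q)^t \<le> exp G"
proof -
  have "(1+q)^t \<le> (1+q)^T" using assms by (intro power_increasing) auto
  also have "\<dots> \<le> (exp q)^T" using assms by (intro power_mono) (auto simp: exp_ge_add_one_self)
  also have "\<dots> = exp (q * real T)" by (simp add: exp_of_nat_mult[symmetric] mult.commute)
  also have "\<dots> \<le> exp G" using assms by simp
  finally show ?thesis .
qed

lemma qT_bound:
  fixes m :: nat
  assumes "\<eta> \<ge> 0" "\<eta> * real m \<le> c2 * \<epsilon>" "r \<ge> 0" "c \<ge> 0"
  shows "real m * (r * c * Y^2 * (\<eta>*2*r*c*Y^2)) * real T \<le> 2*c2*c^2*Y^4 * (real T * \<epsilon> * r^2)"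
proof -
  have "real m * (r * c * Y^2 * (\<eta>*2*r*c*Y^2)) * real T = (\<eta> * real m) * (2*c^2*Y^4*real T*r^2)"
    by (simp add: power2_eq_square power4_eq_xxxx algebra_simps)
  also have "\<dots> \<le> (c2 * \<epsilon>) * (2*c^2*Y^4*real T*r^2)" using assms by (intro mult_right_mono) auto
  also have "\<dots> = 2*c2*c^2*Y^4 * (real T * \<epsilon> * r^2)" by (simp add: algebra_simps)
  finally show ?thesis .
qed

lemma core:
  fixes X :: "nat \<Rightarrow> real^'d::finite" and m :: nat
  assumes d_def: "d = dim_d TYPE('d)" and c_def: "c = cc TYPE('d)"
  assumes r: "0 < r" "r \<le> 1" and s: "0 < s" "s \<le> 1" and e: "0 < \<epsilon>" "\<epsilon> \<le> 1"
    and eta: "\<eta> \<ge> 0" "\<eta> * real m \<le> c2 * \<epsilon>" and m1: "m \<ge> 1" and c2: "c2 > 0" and K: "K \<ge> 1"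
    and nf: "nf \<ge> 0"
    and A1: "real T * sqrt \<epsilon> * r^2 * s^2 * max nf 1 \<le> 1"
    and A4: "real T * \<epsilon> * r^2 \<le> real m"
    and ab: "\<forall>i<m. \<bar>fst (th i)\<bar> \<le> r" and bb: "\<forall>i<m. \<bar>snd (snd (th i))\<bar> \<le> s"
    and w0: "\<forall>i<m. norm (sgd m th f \<eta> X js 0 i) + \<bar>snd (snd (th i))\<bar> \<le> (d+1) * s"
    and E0: "\<forall>x::real^'d. norm x \<le> 1 \<longrightarrow> \<bar>psi m th (sgd m th f \<eta> X js 0) x - f x\<bar> \<le> E0"
    and E0d: "E0 = c*(d+1)^3 * (real m * r * s^3) + c*(d+1)^2 * (nf * r * s^2)"
    and P1: "real m * r * s^3 \<le> \<epsilon>" and P2: "nf * r * s^2 \<le> sqrt \<epsilon>"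
    and Xb: "\<forall>t<T. norm (X (js t)) \<le> 1"
    and Kb: "\<forall>t\<le>T. \<forall>i<m. norm (sgd m th f \<eta> X js t i) \<le> K"
  shows "\<forall>t\<le>T. \<forall>x::real^'d. norm x \<le> 1 \<longrightarrow> \<bar>psi m th (sgd m th f \<eta> X js t) x - f x\<bar>
            \<le> 2*c*(d+1)^3 * sqrt \<epsilon> * exp (GR d c2 + GK d c2 K)"
proof -
  have d1: "d \<ge> 1" unfolding d_def by (rule dim_d_ge)
  have c0: "c \<ge> 0" unfolding c_def by (rule cc_pos)
  have cdef: "c = 6*d+54" unfolding c_def d_def by simp
  have sq1: "sqrt \<epsilon> \<le> 1" using e by simp
  have se: "\<epsilon> \<le> sqrt \<epsilon>"
  proof -
    have "\<epsilon> = sqrt \<epsilon> * sqrt \<epsilon>" using e by simp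
    also have "\<dots> \<le> sqrt \<epsilon> * 1" using sq1 e by (intro mult_left_mono) auto
    finally show ?thesis by simp
  qed
  have s2: "s^2 \<le> 1" using s by (simp add: power_le_one)
  have E0b: "E0 \<le> 2*c*(d+1)^3 * sqrt \<epsilon>"
  proof -
    have "c*(d+1)^3 * (real m * r * s^3) \<le> c*(d+1)^3 * sqrt \<epsilon>" using P1 se c0 d1 by (intro mult_left_mono) auto
    moreover have "c*(d+1)^2 * (nf * r * s^2) \<le> c*(d+1)^3 * sqrt \<epsilon>"
    proof -
      have "c*(d+1)^2 * (nf * r * s^2) \<le> c*(d+1)^2 * sqrt \<epsilon>" using P2 c0 by (intro mult_left_mono) auto
      also have "\<dots> \<le> c*(d+1)^3 * sqrt \<epsilon>" using c0 d1 e by (intro mult_right_mono mult_left_mono) (auto simp: power_increasing)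
      finally show ?thesis .
    qed
    ultimately show ?thesis unfolding E0d by linarith
  qed
  have E00: "E0 \<ge> 0" unfolding E0d using c0 d1 nf r s by simp
  have GR0: "GR d c2 \<ge> 0" unfolding GR_def using c2 d1 by simp
  have K10: "K1c d c2 > 0" unfolding K1c_def using c2 d1 by simp
  have L00: "Lam0 d c2 \<ge> 1" unfolding Lam0_def using K10 d1 by simp
  have L0: "Lam d c2 \<ge> 1" unfolding Lam_def using K10 d1 by simp
  have GK0: "GK d c2 K \<ge> 0" unfolding GK_def using c2 L0 L00 K by simp
  have B1: "real T * \<epsilon> * r^2 * s^2 \<le> 1"
  proof -
    have "real T * \<epsilon> * r^2 * s^2 \<le> real T * sqrt \<epsilon> * r^2 * s^2 * max nf 1"
    proof -
      have "real T * \<epsilon> * r^2 * s^2 \<le> real T * sqrt \<epsilon> * r^2 * s^2"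
        using se by (intro mult_right_mono mult_left_mono) auto
      also have "\<dots> \<le> real T * sqrt \<epsilon> * r^2 * s^2 * max nf 1"
        using mult_left_mono[of 1 "max nf 1" "real T * sqrt \<epsilon> * r^2 * s^2"] e by simp
      finally show ?thesis .
    qed
    then show ?thesis using A1 by linarith
  qed
  have B2: "nf * (real T * \<epsilon> * r^2 * s^2) \<le> 1"
  proof -
    have "nf * (real T * \<epsilon> * r^2 * s^2) \<le> max nf 1 * (real T * sqrt \<epsilon> * r^2 * s^2)"
      using se nf e by (intro mult_mono) auto
    then show ?thesis using A1 by (simp add: algebra_simps)
  qed
  have mpos: "real m > 0" using m1 by simp
  have eta2: "\<eta> \<le> c2 * \<epsilon> / real m" using eta mpos by (simp add: field_simps)
  define X1 where "X1 = real T * \<epsilon> * r^2 * s^2"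
  have X10: "0 \<le> X1" "X1 \<le> 1" unfolding X1_def using B1 e by auto
  have X20: "0 \<le> nf * X1" "nf * X1 \<le> 1" using B2 X10 nf unfolding X1_def by auto
  have fin: "E0 * exp G \<le> 2*c*(d+1)^3 * sqrt \<epsilon> * exp (GR d c2 + GK d c2 K)" if "G \<le> GR d c2 + GK d c2 K" for G
    using E0b E00 that c0 d1 e by (intro mult_mono) auto
  show ?thesis
  proof (cases "real m \<ge> Lam d c2 \<and> s^2 \<le> 1 / Lam0 d c2")
    case True
    define Y where "Y = (d+2) * s"
    define q where "q = real m * (r * cc TYPE('d) * Y^2 * (\<eta>*2*r*cc TYPE('d)*Y^2))"
    define \<delta> where "\<delta> = \<eta>*2*(E0*(1+q)^T)*r*cc TYPE('d)*Y^2"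
    have q0: "q \<ge> 0" unfolding q_def using eta r cc_pos[where 'd='d] by simp
    have "q * real T \<le> 2*c2*c^2*Y^4 * (real T * \<epsilon> * r^2)"
      unfolding q_def c_def by (rule qT_bound) (use eta r cc_pos[where 'd='d] in auto)
    also have "\<dots> = 2*c2*c^2*(d+2)^4 * (X1 * s^2)" unfolding Y_def X1_def by (simp add: power_mult_distrib power4_eq_xxxx power2_eq_square algebra_simps)
    also have "\<dots> \<le> 2*c2*c^2*(d+2)^4 * (1 * 1)" using X10 s2 c2 d1 by (intro mult_left_mono mult_mono) auto
    also have "\<dots> = GR d c2" unfolding GR_def cdef by simp
    finally have qT: "q * real T \<le> GR d c2" .
    have pT: "(1+q)^T \<le> exp (GR d c2)" by (rule pow_exp_bound[OF q0 order_refl qT])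
    have mvb: "real T * \<delta> \<le> s"
    proof -
      have "real T * \<delta> = \<eta> * (2 * (1+q)^T * c * (d+2)^2) * (real T * E0 * r * s^2)"
      proof -
        have Y2: "Y^2 = (d+2)^2 * s^2" unfolding Y_def by (simp add: power_mult_distrib)
        show ?thesis unfolding \<delta>_def Y2 c_def by (simp add: algebra_simps)
      qed
      also have "\<dots> \<le> (c2 * \<epsilon> / real m) * (2 * exp (GR d c2) * c * (d+2)^2) * (real T * E0 * r * s^2)"
        using eta2 eta pT q0 c0 d1 E00 r s by (intro mult_mono mult_right_mono) auto
      also have "\<dots> = K1c d c2 * (real T * \<epsilon> * E0 * r * s^2) / real m" unfolding K1c_def cdef by (simp add: algebra_simps add_divide_distrib)
      also have "real T * \<epsilon> * E0 * r * s^2 = c*(d+1)^3 * X1 * real m * s^3 + c*(d+1)^2 * (nf * X1) * s^2"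
        unfolding E0d X1_def by (simp add: power2_eq_square power3_eq_cube algebra_simps)
      finally have "real T * \<delta> \<le> K1c d c2 * (c*(d+1)^3 * X1 * real m * s^3 + c*(d+1)^2 * (nf * X1) * s^2) / real m" .
      also have "\<dots> = K1c d c2 * c*(d+1)^3 * X1 * s^3 + K1c d c2 * c*(d+1)^2 * (nf * X1) * (s^2 / real m)"
        using mpos by (simp add: field_simps)
      also have "\<dots> \<le> K1c d c2 * c*(d+1)^3 * 1 * s^3 + K1c d c2 * c*(d+1)^2 * 1 * (s / Lam d c2)"
      proof (intro add_mono mult_mono mult_left_mono)
        show "s^2 / real m \<le> s / Lam d c2"
        proof -
          have "s^2 / real m \<le> s / real m" using s mpos by (intro divide_right_mono) (auto simp: power2_eq_square mult_left_le)
          also have "\<dots> \<le> s / Lam d c2" using True L0 s by (intro divide_left_mono) auto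
          finally show ?thesis .
        qed
      qed (use X10 X20 K10 c0 d1 s L0 in auto)
      also have "K1c d c2 * c*(d+1)^3 * 1 * s^3 = (K1c d c2 * c*(d+1)^3 * s^2) * s" by (simp add: power2_eq_square power3_eq_cube)
      also have "K1c d c2 * c*(d+1)^2 * 1 * (s / Lam d c2) = (K1c d c2 * c*(d+1)^2 / Lam d c2) * s" by simp
      also have "(K1c d c2 * c*(d+1)^3 * s^2) * s + (K1c d c2 * c*(d+1)^2 / Lam d c2) * s \<le> (1/2) * s + (1/2) * s"
      proof (intro add_mono mult_right_mono)
        have "K1c d c2 * c*(d+1)^3 * s^2 \<le> K1c d c2 * c*(d+1)^3 * (1 / Lam0 d c2)"
          using True K10 c0 d1 by (intro mult_left_mono) auto
        also have "\<dots> \<le> 1/2"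
        proof -
          have P0: "K1c d c2 * c*(d+1)^3 \<ge> 0" using K10 c0 d1 by simp
          have "Lam0 d c2 = 2 * (K1c d c2 * c*(d+1)^3) + 1" unfolding Lam0_def cdef by simp
          then show ?thesis using P0 by (simp add: field_simps)
        qed
        finally show "K1c d c2 * c*(d+1)^3 * s^2 \<le> 1/2" .
        have P0: "K1c d c2 * c*(d+1)^2 \<ge> 0" using K10 c0 d1 by simp
        have "Lam d c2 = 2 * (K1c d c2 * c*(d+1)^2) + 1" unfolding Lam_def cdef by simp
        then show "K1c d c2 * c*(d+1)^2 / Lam d c2 \<le> 1/2" using P0 by (simp add: field_simps)
      qed (use s in auto)
      finally show ?thesis by simp
    qed
    have Y0b: "\<forall>i<m. norm (sgd m th f \<eta> X js 0 i) + \<bar>snd (snd (th i))\<bar> + s \<le> Y"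
      using w0 unfolding Y_def by (auto simp: algebra_simps)
    note R = dyn_R[OF ab Y0b eta(1) Xb E0 q_def r(1)[THEN less_imp_le] \<delta>_def mvb]
    show ?thesis
    proof (intro allI impI)
      fix t x assume t: "t \<le> T" and x: "norm (x::real^'d) \<le> 1"
      have "\<bar>psi m th (sgd m th f \<eta> X js t) x - f x\<bar> \<le> E0 * (1+q)^t" using R[OF t] x by blast
      also have "\<dots> \<le> E0 * exp (GR d c2)" using E00 pow_exp_bound[OF q0 t qT] by (intro mult_left_mono) auto
      also have "\<dots> \<le> 2*c*(d+1)^3 * sqrt \<epsilon> * exp (GR d c2 + GK d c2 K)" by (rule fin) (use GK0 in simp)
      finally show "\<bar>psi m th (sgd m th f \<eta> X js t) x - f x\<bar> \<le> 2*c*(d+1)^3 * sqrt \<epsilon> * exp (GR d c2 + GK d c2 K)" .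
    qed
  next
    case False
    define Y where "Y = K + 1"
    define q where "q = real m * (r * cc TYPE('d) * Y^2 * (\<eta>*2*r*cc TYPE('d)*Y^2))"
    have q0: "q \<ge> 0" unfolding q_def using eta r cc_pos[where 'd='d] by simp
    have TL: "real T * \<epsilon> * r^2 \<le> Lam d c2 + Lam0 d c2"
    proof (cases "real m < Lam d c2")
      case True
      then show ?thesis using A4 L00 by linarith
    next
      case F2: False
      hence "s^2 > 1 / Lam0 d c2" using False by auto
      hence "1 < s^2 * Lam0 d c2" using L00 by (simp add: field_simps)
      hence "real T * \<epsilon> * r^2 \<le> real T * \<epsilon> * r^2 * (s^2 * Lam0 d c2)"
      proof -
        have "0 \<le> real T * \<epsilon> * r^2" using e by simp
        then show ?thesis using \<open>1 < s^2 * Lam0 d c2\<close> by (simp add: mult_le_cancel_left1)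
      qed
      also have "\<dots> = X1 * Lam0 d c2" unfolding X1_def by (simp add: algebra_simps)
      also have "\<dots> \<le> 1 * Lam0 d c2" using X10 L00 by (intro mult_right_mono) auto
      finally show ?thesis using L0 by linarith
    qed
    have "q * real T \<le> 2*c2*c^2*Y^4 * (real T * \<epsilon> * r^2)"
      unfolding q_def c_def by (rule qT_bound) (use eta r cc_pos[where 'd='d] in auto)
    also have "\<dots> \<le> 2*c2*c^2*Y^4 * (Lam d c2 + Lam0 d c2)" using TL c2 by (intro mult_left_mono) auto
    also have "\<dots> = GK d c2 K" unfolding GK_def Y_def cdef by simp
    finally have qT: "q * real T \<le> GK d c2 K" .
    have Yb: "\<forall>t\<le>T. \<forall>i<m. norm (sgd m th f \<eta> X js t i) + \<bar>snd (snd (th i))\<bar> \<le> Y"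
      using Kb bb s unfolding Y_def by (smt (verit))
    note KK = dyn_K[OF ab Yb eta(1) Xb E0 q_def]
    show ?thesis
    proof (intro allI impI)
      fix t x assume t: "t \<le> T" and x: "norm (x::real^'d) \<le> 1"
      have "\<bar>psi m th (sgd m th f \<eta> X js t) x - f x\<bar> \<le> E0 * (1+q)^t" using KK[OF t] x by blast
      also have "\<dots> \<le> E0 * exp (GK d c2 K)" using E00 pow_exp_bound[OF q0 t qT] by (intro mult_left_mono) auto
      also have "\<dots> \<le> 2*c*(d+1)^3 * sqrt \<epsilon> * exp (GR d c2 + GK d c2 K)" by (rule fin) (use GR0 in simp)
      finally show "\<bar>psi m th (sgd m th f \<eta> X js t) x - f x\<bar> \<le> 2*c*(d+1)^3 * sqrt \<epsilon> * exp (GR d c2 + GK d c2 K)" .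
    qed
  qed
qed



lemma powr_inv_le:
  fixes x e M :: real
  assumes "0 \<le> x" "0 < e" "x powr (1/e) \<le> M"
  shows "x \<le> M powr e"
proof -
  have "x = (x powr (1/e)) powr e" using assms by (simp add: powr_powr)
  also have "\<dots> \<le> M powr e" using assms by (intro powr_mono2) auto
  finally show ?thesis .
qed

lemma pw_r2: "(M::real) > 0 \<Longrightarrow> (M powr a)^2 = M powr (2*a)"
  by (simp add: powr_power)
lemma pw_r3: "(M::real) > 0 \<Longrightarrow> (M powr a)^3 = M powr (3*a)"
  by (simp add: powr_power)

lemma P1_lem:
  fixes M al be Cd \<epsilon> :: real
  assumes M: "M \<ge> 1" and e1: "al + 3*be - 1 > 0" and h: "(Cd / \<epsilon>) powr (1 / (al + 3*be - 1)) \<le> M"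
    and Cd: "Cd \<ge> 1" and e: "\<epsilon> > 0"
  shows "M * M powr (-al) * (M powr (-be))^3 \<le> \<epsilon>"
proof -
  have Mp: "M > 0" using M by simp
  have "Cd / \<epsilon> \<le> M powr (al + 3*be - 1)" by (rule powr_inv_le[OF _ e1 h]) (use Cd e in simp)
  hence "Cd \<le> \<epsilon> * M powr (al + 3*be - 1)" using e by (simp add: field_simps)
  hence "1 \<le> \<epsilon> * M powr (al + 3*be - 1)" using Cd by linarith
  moreover have "M * M powr (-al) * (M powr (-be))^3 = 1 / M powr (al + 3*be - 1)"
    using Mp by (simp add: pw_r3 powr_minus[symmetric] powr_add[symmetric] powr_diff divide_simps)
  ultimately show ?thesis using Mp e by (simp add: divide_le_eq mult.commute)
qed

lemma P2_lem:
  fixes M al be nf \<epsilon> :: real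
  assumes M: "M \<ge> 1" and e4: "2*al + 4*be > 0" and h: "(nf^2 / \<epsilon>) powr (1 / (2*al + 4*be)) \<le> M"
    and nf: "nf \<ge> 0" and e: "\<epsilon> > 0"
  shows "nf * M powr (-al) * (M powr (-be))^2 \<le> sqrt \<epsilon>"
proof -
  have Mp: "M > 0" using M by simp
  have "nf^2 / \<epsilon> \<le> M powr (2*al + 4*be)" by (rule powr_inv_le[OF _ e4 h]) (use e in simp)
  hence h2: "nf^2 \<le> \<epsilon> * M powr (2*al + 4*be)" using e by (simp add: field_simps)
  have eq: "(nf * M powr (-al) * (M powr (-be))^2)^2 = nf^2 / M powr (2*al + 4*be)"
    using Mp by (simp add: pw_r2 power_mult_distrib powr_power powr_minus[symmetric] powr_add[symmetric] divide_simps algebra_simps)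
  have "(nf * M powr (-al) * (M powr (-be))^2)^2 \<le> \<epsilon>" unfolding eq using h2 Mp by (simp add: field_simps)
  then show ?thesis by (rule real_le_rsqrt)
qed

lemma A1_lem:
  fixes M al be nf \<epsilon> :: real
  assumes M: "M \<ge> 1" and nf: "nf \<ge> 0" and e: "\<epsilon> > 0" and T0: "T \<ge> 0"
    and h: "T \<le> 1 / ((nf + 1)^2 * max nf 1) * (M powr (2*al + 2*be) / \<epsilon> powr (1/2))"
  shows "T * sqrt \<epsilon> * (M powr (-al))^2 * (M powr (-be))^2 * max nf 1 \<le> 1"
proof -
  have Mp: "M > 0" using M by simp
  have n1: "(nf + 1)^2 \<ge> 1" using nf by (simp add: one_le_power)
  have mx: "max nf 1 \<ge> 1" by simp
  define Q where "Q = (nf + 1)^2 * (max nf 1 * sqrt \<epsilon>)"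
  have Qp: "Q > 0" unfolding Q_def using e nf by simp
  have "T \<le> M powr (2*al + 2*be) / Q" using h e unfolding Q_def by (simp add: powr_half_sqrt mult.assoc)
  hence TQ: "T * Q \<le> M powr (2*al + 2*be)" using Qp by (simp add: pos_le_divide_eq)
  have "T * (max nf 1 * sqrt \<epsilon>) \<le> T * Q" unfolding Q_def
    using mult_right_mono[OF n1, of "T * (max nf 1 * sqrt \<epsilon>)"] T0 e by (simp add: algebra_simps)
  hence "T * (max nf 1 * sqrt \<epsilon>) \<le> M powr (2*al + 2*be)" using TQ by linarith
  then have a: "T * (max nf 1 * sqrt \<epsilon>) \<le> M powr (2*al + 2*be)" .
  have eq: "(M powr (-al))^2 * (M powr (-be))^2 = 1 / M powr (2*al + 2*be)"
    using Mp by (simp add: pw_r2 powr_minus[symmetric] powr_add[symmetric] divide_simps algebra_simps)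
  have "T * sqrt \<epsilon> * (M powr (-al))^2 * (M powr (-be))^2 * max nf 1 = T * (max nf 1 * sqrt \<epsilon>) / M powr (2*al + 2*be)"
    using eq by (simp add: algebra_simps)
  also have "\<dots> \<le> 1" using a Mp by (simp add: divide_le_eq)
  finally show ?thesis .
qed

lemma A4_lem:
  fixes M al be nf \<epsilon> Cf :: real
  assumes M: "M \<ge> 1" and e: "\<epsilon> > 0" "\<epsilon> \<le> 1" and T0: "T \<ge> 0" and al: "al \<ge> 0"
    and Cf: "0 \<le> Cf" "Cf \<le> 1"
    and h: "T \<le> Cf * (M powr ((2 + 4*al)/3) / \<epsilon> powr (2/3))"
  shows "T * \<epsilon> * (M powr (-al))^2 \<le> M"
proof -
  have Mp: "M > 0" using M by simp
  have "T \<le> M powr ((2 + 4*al)/3) / \<epsilon> powr (2/3)"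
    using h Cf by (meson dual_order.trans mult_left_le_one_le divide_nonneg_nonneg powr_ge_zero)
  hence "T * \<epsilon> powr (2/3) \<le> M powr ((2 + 4*al)/3)" using e by (simp add: field_simps)
  moreover have "\<epsilon> \<le> \<epsilon> powr (2/3)" using powr_mono'[of "2/3" 1 \<epsilon>] e by simp
  ultimately have a: "T * \<epsilon> \<le> M powr ((2 + 4*al)/3)" using T0 by (smt (verit) mult_left_mono)
  have "T * \<epsilon> * (M powr (-al))^2 \<le> M powr ((2 + 4*al)/3) * M powr (-2*al)"
    using a Mp by (simp add: pw_r2 mult_right_mono)
  also have "\<dots> = M powr ((2 - 2*al)/3)" by (simp add: powr_add[symmetric] field_simps)
  also have "\<dots> \<le> M powr 1" using M al by (intro powr_mono) auto
  finally show ?thesis using Mp by simp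
qed



lemma Lambda_sets': "Lambda al be m \<in> sets (borel :: 'd::finite param measure)"
  using Lambda_sets[of al be m, where 'd='d] by simp

lemma unif_prob:
  assumes "m \<ge> 1" shows "prob_space (uniform_measure lborel (Lambda al be m :: 'd::finite param set))"
proof (rule prob_space_uniform_measure)
  have "0 < emeasure lborel (Lambda al be m :: 'd::finite param set)" by (rule Lambda_pos[OF assms])
  then show "emeasure lborel (Lambda al be m :: 'd::finite param set) \<noteq> 0" by simp
  have "emeasure lborel (Lambda al be m :: 'd::finite param set) < \<infinity>" by (rule Lambda_fin)
  then show "emeasure lborel (Lambda al be m :: 'd::finite param set) \<noteq> \<infinity>" by simp
qed

lemma E_sets: "({..<m} \<rightarrow>\<^sub>E Lambda al be m) \<in> sets (init_measure al be m :: (nat \<Rightarrow> 'd::finite param) measure)"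
  unfolding init_measure_def by (intro sets_PiM_I_finite) (auto simp: sets_uniform_measure Lambda_sets')

lemma E_meas:
  assumes "m \<ge> 1"
  shows "measure (init_measure al be m :: (nat \<Rightarrow> 'd::finite param) measure) ({..<m} \<rightarrow>\<^sub>E Lambda al be m) = 1"
proof -
  let ?U = "uniform_measure lborel (Lambda al be m :: 'd param set)"
  have P: "prob_space ?U" by (rule unif_prob[OF assms])
  interpret product_sigma_finite "\<lambda>_::nat. ?U"
    unfolding product_sigma_finite_def using prob_space_imp_sigma_finite[OF P] by simp
  have "emeasure (init_measure al be m :: (nat \<Rightarrow> 'd::finite param) measure) ({..<m} \<rightarrow>\<^sub>E Lambda al be m)
      = (\<Prod>i\<in>{..<m}. emeasure ?U (Lambda al be m))"
    unfolding init_measure_def by (rule emeasure_PiM) (auto simp: sets_uniform_measure Lambda_sets')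
  also have "\<dots> = 1"
  proof -
    have "0 < emeasure lborel (Lambda al be m :: 'd::finite param set)" by (rule Lambda_pos[OF assms])
    moreover have "emeasure lborel (Lambda al be m :: 'd::finite param set) < \<infinity>" by (rule Lambda_fin)
    ultimately have "emeasure ?U (Lambda al be m) = 1" by (intro emeasure_uniform_measure_1) auto
    then show ?thesis by simp
  qed
  finally show ?thesis by (simp add: measure_def)
qed

lemma train_loss_bound:
  assumes "N \<ge> 1" "\<forall>n<N. \<bar>psi m th W (X n) - f (X n)\<bar> \<le> B"
  shows "train_loss m th f N X W \<le> B^2"
proof -
  have "(\<Sum>n<N. (psi m th W (X n) - f (X n))^2) \<le> (\<Sum>n<N. B^2)"
  proof (rule sum_mono)
    fix n assume "n \<in> {..<N}"
    hence "\<bar>psi m th W (X n) - f (X n)\<bar> \<le> B" using assms by simp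
    then show "(psi m th W (X n) - f (X n))^2 \<le> B^2" by (metis abs_le_square_iff abs_of_nonneg abs_ge_zero order_trans power2_abs)
  qed
  then show ?thesis unfolding train_loss_def using assms(1) by (simp add: field_simps)
qed

lemma E_sgd_bound:
  assumes "N \<ge> 1" "L \<ge> 0"
    and "\<forall>js\<in>{..<T} \<rightarrow>\<^sub>E {..<N}. \<forall>t<T. train_loss m th f N X (sgd m th f \<eta> X js t) \<le> L"
  shows "E_sgd m th f \<eta> N T X \<le> L"
proof -
  have each: "(1 / real T) * (\<Sum>t<T. train_loss m th f N X (sgd m th f \<eta> X js t)) \<le> L"
    if js: "js \<in> {..<T} \<rightarrow>\<^sub>E {..<N}" for js
  proof (cases "T = 0")
    case True then show ?thesis using assms by simp
  next
    case False
    have "(\<Sum>t<T. train_loss m th f N X (sgd m th f \<eta> X js t)) \<le> (\<Sum>t<T. L)"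
      using assms(3) js by (intro sum_mono) auto
    then show ?thesis using False by (simp add: field_simps)
  qed
  have "(\<Sum>js\<in>{..<T} \<rightarrow>\<^sub>E {..<N}. (1 / real T) * (\<Sum>t<T. train_loss m th f N X (sgd m th f \<eta> X js t)))
      \<le> (\<Sum>js\<in>{..<T} \<rightarrow>\<^sub>E {..<N}. L)" using each by (intro sum_mono) auto
  also have "\<dots> = real N ^ T * L" by (simp add: card_funcsetE)
  finally show ?thesis unfolding E_sgd_def using assms(1) by (simp add: field_simps)
qed

lemma E_X_bound:
  assumes D: "prob_space D" "sets D = sets borel" "AE x in D. x \<in> Gamma" and L: "L \<ge> 0"
    and b: "\<forall>X. (\<forall>n<N. X n \<in> Gamma) \<longrightarrow> E_sgd m th f \<eta> N T X \<le> L"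
  shows "E_X_sgd m th f \<eta> N T D \<le> L"
proof -
  let ?P = "PiM {..<N} (\<lambda>_. D)"
  have P: "prob_space ?P" by (rule prob_space_PiM) (use D in simp)
  have "AE X in ?P. \<forall>n\<in>{..<N}. X n \<in> Gamma"
    by (intro AE_finite_allI) (auto intro!: AE_PiM_component D)
  hence ae: "AE X in ?P. E_sgd m th f \<eta> N T X \<le> L" using b by (auto elim!: eventually_mono)
  show ?thesis
  proof (cases "integrable ?P (\<lambda>X. E_sgd m th f \<eta> N T X)")
    case True
    then show ?thesis unfolding E_X_sgd_def by (rule prob_space.integral_le_const[OF P _ ae])
  next
    case False
    then show ?thesis unfolding E_X_sgd_def using L by (simp add: not_integrable_integral_eq)
  qed
qed



theorem theorem3p4:
  fixes K c1 c2 :: real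
  assumes "K \<ge> 1" and "0 < c1" and "c1 \<le> c2"
  shows "\<exists>C::real. \<forall>(al::real) (be::real) (m::nat) (f::real^'d::finite \<Rightarrow> real)
     (D::(real^'d) measure) (\<epsilon>::real) (\<delta>::real) (N::nat) (T::nat) (\<eta>::real).
     al \<ge> 0 \<longrightarrow> be \<ge> 0 \<longrightarrow> al + 3 * be > 1 \<longrightarrow> m \<ge> 1 \<longrightarrow> N \<ge> 1 \<longrightarrow>
     in_F al be m f \<longrightarrow>
     (\<exists>A. F_admissible al be m f A \<and> F_cost al be m A = F_norm al be m f) \<longrightarrow>
     prob_space D \<longrightarrow> sets D = sets borel \<longrightarrow> (AE x in D. x \<in> Gamma) \<longrightarrow>
     0 < \<epsilon> \<longrightarrow> \<epsilon> \<le> 1 \<longrightarrow> 0 < \<delta> \<longrightarrow> \<delta> < 1 \<longrightarrow>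
     real m \<ge> M_bound (dim_d TYPE('d)) al be (F_norm al be m f) \<epsilon> \<delta> \<longrightarrow>
     T0_bound (real m) al be (F_norm al be m f) \<epsilon> > (F_norm al be m f)^2 / \<epsilon>^2 \<longrightarrow>
     (F_norm al be m f)^2 / \<epsilon>^2 \<le> real T \<longrightarrow>
     real T \<le> T0_bound (real m) al be (F_norm al be m f) \<epsilon> \<longrightarrow>
     c1 * \<epsilon> / real m \<le> \<eta> \<longrightarrow> \<eta> \<le> c2 * \<epsilon> / real m \<longrightarrow>
     (\<forall>th \<in> {..<m} \<rightarrow>\<^sub>E Lambda al be m. \<forall>X. (\<forall>n<N. X n \<in> Gamma) \<longrightarrow>
        (\<forall>js. (\<forall>t<T. js t < N) \<longrightarrow> (\<forall>t\<le>T.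
           (\<forall>i<m. norm (sgd m th f \<eta> X js t i) \<le> K) \<and>
           (\<forall>x\<in>Gamma. \<bar>psi m th (sgd m th f \<eta> X js t) x\<bar> \<le> K)))) \<longrightarrow>
     (\<exists>E \<in> sets (init_measure al be m :: (nat \<Rightarrow> 'd param) measure).
        measure (init_measure al be m) E \<ge> 1 - \<delta> \<and>
        (\<forall>th\<in>E. E_X_sgd m th f \<eta> N T D \<le> C * \<epsilon>))"
proof -
  define d where "d = dim_d TYPE('d)"
  define c where "c = cc TYPE('d)"
  define C where "C = (2*c*(d+1)^3)^2 * exp (2*(GR d c2 + GK d c2 K))"
  have d1: "d \<ge> 1" unfolding d_def by (rule dim_d_ge)
  have c0: "c \<ge> 0" unfolding c_def by (rule cc_pos)
  have C0: "C \<ge> 0" unfolding C_def by simp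
  show ?thesis
  proof (rule exI[of _ C], intro allI impI)
    fix al be :: real and m :: nat and f :: "real^'d \<Rightarrow> real" and D :: "(real^'d) measure"
      and \<epsilon> \<delta> :: real and N T :: nat and \<eta> :: real
    assume al0: "al \<ge> 0" and be0: "be \<ge> 0" and ab3: "al + 3 * be > 1" and m1: "m \<ge> 1" and N1: "N \<ge> 1"
      and inF: "in_F al be m f"
      and exA: "\<exists>A. F_admissible al be m f A \<and> F_cost al be m A = F_norm al be m f"
      and Dp: "prob_space D" and Ds: "sets D = sets borel" and Dae: "AE x in D. x \<in> Gamma"
      and e0: "0 < \<epsilon>" and e1: "\<epsilon> \<le> 1" and d0: "0 < \<delta>" and d1': "\<delta> < 1"
      and hM: "real m \<ge> M_bound (dim_d TYPE('d)) al be (F_norm al be m f) \<epsilon> \<delta>"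
      and hT0: "T0_bound (real m) al be (F_norm al be m f) \<epsilon> > (F_norm al be m f)^2 / \<epsilon>^2"
      and hTl: "(F_norm al be m f)^2 / \<epsilon>^2 \<le> real T"
      and hTu: "real T \<le> T0_bound (real m) al be (F_norm al be m f) \<epsilon>"
      and heta1: "c1 * \<epsilon> / real m \<le> \<eta>" and heta2: "\<eta> \<le> c2 * \<epsilon> / real m"
      and noexp: "\<forall>th \<in> {..<m} \<rightarrow>\<^sub>E Lambda al be m. \<forall>X. (\<forall>n<N. X n \<in> Gamma) \<longrightarrow>
        (\<forall>js. (\<forall>t<T. js t < N) \<longrightarrow> (\<forall>t\<le>T.
           (\<forall>i<m. norm (sgd m th f \<eta> X js t i) \<le> K) \<and>
           (\<forall>x\<in>Gamma. \<bar>psi m th (sgd m th f \<eta> X js t) x\<bar> \<le> K)))"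
    show "\<exists>E \<in> sets (init_measure al be m :: (nat \<Rightarrow> 'd param) measure).
        measure (init_measure al be m) E \<ge> 1 - \<delta> \<and>
        (\<forall>th\<in>E. E_X_sgd m th f \<eta> N T D \<le> C * \<epsilon>)"
    proof -
    define nf where "nf = F_norm al be m f"
    define M where "M = real m"
    define r where "r = M powr (-al)"
    define s where "s = M powr (-be)"
    have M1: "M \<ge> 1" unfolding M_def using m1 by simp
    have Mp: "M > 0" using M1 by simp
    obtain A where adm: "F_admissible al be m f A" and cost: "F_cost al be m A = nf"
      using exA unfolding nf_def by blast
    have nf0: "nf \<ge> 0"
    proof -
      have z: "(0, 0, 0) \<in> (Lambda al be m :: 'd param set)" unfolding Lambda_def by simp
      have bdd: "bdd_above ((\<lambda>\<theta>. norm (A \<theta>) / pdens al be m \<theta>) ` Lambda al be m)"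
        using adm unfolding F_admissible_def by simp
      have "norm (A (0,0,0)) / pdens al be m ((0,0,0)::'d param) \<le> F_cost al be m A"
        unfolding F_cost_def using cSUP_upper[OF z bdd] by simp
      moreover have "pdens al be m ((0,0,0)::'d param) \<ge> 0" unfolding pdens_def by simp
      moreover have "0 \<le> norm (A (0,0,0)) / pdens al be m ((0,0,0)::'d param)"
        using calculation(2) by (intro divide_nonneg_nonneg) auto
      ultimately show ?thesis using cost by linarith
    qed
    have r0: "0 < r" "r \<le> 1" unfolding r_def using M1 al0 powr_mono[of "-al" 0 M] by auto
    have s0: "0 < s" "s \<le> 1" unfolding s_def using M1 be0 powr_mono[of "-be" 0 M] by auto
    define MS where "MS = {((2 * C_d (dim_d TYPE('d)) * nf * (1 + sqrt (2 * ln (1 / \<delta>))))^2 / \<epsilon>) powr (1 / (2*al + 4*be + 1)),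
     (C_d' (dim_d TYPE('d)) / \<epsilon>) powr (1 / (al + 3*be - 1)),
     (nf / \<epsilon>) powr (1 / (2*al + 5*be - 1)),
     (nf^2 / \<epsilon>) powr (1 / (2*al + 4*be))}"
    have finM: "finite MS" unfolding MS_def by (rule finite_insert[THEN iffD2])+ simp
    have hM': "real m \<ge> Max MS" using hM unfolding nf_def MS_def by (simp only: M_bound_def)
    have Mb2: "(C_d' (dim_d TYPE('d)) / \<epsilon>) powr (1 / (al + 3*be - 1)) \<le> M"
    proof -
      have "(C_d' (dim_d TYPE('d)) / \<epsilon>) powr (1 / (al + 3*be - 1)) \<in> MS" unfolding MS_def by (rule insertI2, rule insertI1)
      then have "(C_d' (dim_d TYPE('d)) / \<epsilon>) powr (1 / (al + 3*be - 1)) \<le> Max MS" by (rule Max_ge[OF finM])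
      then show ?thesis using hM' unfolding M_def by linarith
    qed
    have Mb4: "(nf^2 / \<epsilon>) powr (1 / (2*al + 4*be)) \<le> M"
    proof -
      have "(nf^2 / \<epsilon>) powr (1 / (2*al + 4*be)) \<in> MS" unfolding MS_def by (rule insertI2, rule insertI2, rule insertI2, rule insertI1)
      then have "(nf^2 / \<epsilon>) powr (1 / (2*al + 4*be)) \<le> Max MS" by (rule Max_ge[OF finM])
      then show ?thesis using hM' unfolding M_def by linarith
    qed
    have Cd1: "C_d' d \<ge> 1"
    proof -
      have "0 \<le> d powr (5/2)" "0 \<le> d powr (3/2)" "0 \<le> d powr (1/2)" "0 \<le> d^2" by auto
      then show ?thesis unfolding C_d'_def using d1 by linarith
    qed
    have P1: "real m * r * s^3 \<le> \<epsilon>"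
      unfolding r_def s_def M_def[symmetric]
      by (rule P1_lem[OF M1 _ Mb2 _ e0]) (use ab3 Cd1 d_def in auto)
    have P2: "nf * r * s^2 \<le> sqrt \<epsilon>"
      unfolding r_def s_def
      by (rule P2_lem[OF M1 _ Mb4 nf0 e0]) (use ab3 al0 be0 in linarith)
    define Cf where "Cf = 1 / ((nf + 1)^2 * max nf 1)"
    have Cf0: "0 \<le> Cf" "Cf \<le> 1" unfolding Cf_def using nf0
      by (auto simp: field_simps one_le_power intro!: mult_ge1_I) 
    define SS where "SS = {M powr ((1 + 3*al + be) / 2) / \<epsilon> powr (3/4),
     M powr ((1 + 5*al + 3*be) / 3) / \<epsilon> powr (2/3),
     M powr ((2 + 4*al) / 3) / \<epsilon> powr (2/3),
     M powr (2*al + 2*be) / \<epsilon> powr (1/2),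
     M powr (-1 + 3*al + 5*be) / \<epsilon>,
     M powr ((2 + 5*al + 2*be) / 3) / \<epsilon> powr (2/3),
     M powr ((1 + 4*al + 3*be) / 2) / \<epsilon> powr (1/2),
     M powr (1 + 2*al + be) / \<epsilon> powr (1/2)}"
    have T0eq: "T0_bound (real m) al be nf \<epsilon> = Cf * Min SS" unfolding T0_bound_def Cf_def SS_def M_def by (rule refl)
    have Tu: "real T \<le> Cf * Min SS" using hTu T0eq unfolding nf_def by simp
    have finS: "finite SS" unfolding SS_def by (rule finite_insert[THEN iffD2])+ simp
    have T3: "real T \<le> Cf * (M powr ((2 + 4*al) / 3) / \<epsilon> powr (2/3))"
    proof -
      have "Min SS \<le> M powr ((2 + 4*al) / 3) / \<epsilon> powr (2/3)" by (rule Min_le[OF finS]) (unfold SS_def, rule insertI2, rule insertI2, rule insertI1)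
      hence "Cf * Min SS \<le> Cf * (M powr ((2 + 4*al) / 3) / \<epsilon> powr (2/3))" by (rule mult_left_mono[OF _ Cf0(1)])
      then show ?thesis using Tu by linarith
    qed
    have T4: "real T \<le> Cf * (M powr (2*al + 2*be) / \<epsilon> powr (1/2))"
    proof -
      have "Min SS \<le> M powr (2*al + 2*be) / \<epsilon> powr (1/2)" by (rule Min_le[OF finS]) (unfold SS_def, rule insertI2, rule insertI2, rule insertI2, rule insertI1)
      hence "Cf * Min SS \<le> Cf * (M powr (2*al + 2*be) / \<epsilon> powr (1/2))" by (rule mult_left_mono[OF _ Cf0(1)])
      then show ?thesis using Tu by linarith
    qed
    have A1: "real T * sqrt \<epsilon> * r^2 * s^2 * max nf 1 \<le> 1"
      unfolding r_def s_def by (rule A1_lem[OF M1 nf0 e0 _ T4[unfolded Cf_def]]) simp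
    have A4: "real T * \<epsilon> * r^2 \<le> real m"
      using A4_lem[OF M1 e0 e1 _ al0 Cf0 T3] unfolding r_def M_def by simp
    have "c1 * \<epsilon> / real m \<ge> 0" using assms(2) e0 by simp
    hence etap: "\<eta> \<ge> 0" using heta1 by linarith
    have etam: "\<eta> * real m \<le> c2 * \<epsilon>" using heta2 Mp unfolding M_def by (simp add: field_simps)
    have c2p: "c2 > 0" using assms(2,3) by linarith
    define E where "E = ({..<m} \<rightarrow>\<^sub>E Lambda al be m :: (nat \<Rightarrow> 'd param) set)"
    show ?thesis
    proof (rule bexI[of _ E], intro conjI ballI)
      show "E \<in> sets (init_measure al be m :: (nat \<Rightarrow> 'd param) measure)" unfolding E_def by (rule E_sets)
      show "measure (init_measure al be m :: (nat \<Rightarrow> 'd param) measure) E \<ge> 1 - \<delta>"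
        unfolding E_def using E_meas[OF m1, of al be, where 'd='d] d0 by simp
      fix th assume thE: "th \<in> E"
      have thL: "\<forall>i<m. th i \<in> Lambda al be m" using thE unfolding E_def by auto
      have thp: "th i = (fst (th i), fst (snd (th i)), snd (snd (th i)))" for i by simp
      have thL': "(fst (th i), fst (snd (th i)), snd (snd (th i))) \<in> Lambda al be m" if "i < m" for i
        using thL that by simp
      have ab: "\<forall>i<m. \<bar>fst (th i)\<bar> \<le> r"
        using Lambda_Y(2)[OF thL'] unfolding r_def M_def by blast
      have bb: "\<forall>i<m. \<bar>snd (snd (th i))\<bar> \<le> s"
        using thL unfolding s_def M_def Lambda_def by (auto split: prod.splits)
      have w0': "\<forall>i<m. norm (W0 th i) + \<bar>snd (snd (th i))\<bar> \<le> (d+1) * s"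
        using Lambda_Y(1)[OF thL'] unfolding s_def M_def d_def W0_def by blast
      define E0 where "E0 = c*(d+1)^3 * (real m * r * s^3) + c*(d+1)^2 * (nf * r * s^2)"
      define B where "B = 2*c*(d+1)^3 * sqrt \<epsilon> * exp (GR d c2 + GK d c2 K)"
      have B2: "B^2 = C * \<epsilon>" unfolding B_def C_def using e0
        by (simp add: power_mult_distrib exp_double[symmetric] algebra_simps)
      have E0b: "\<forall>x::real^'d. norm x \<le> 1 \<longrightarrow> \<bar>psi m th (sgd m th f \<eta> X js 0) x - f x\<bar> \<le> E0" for X js
      proof (intro allI impI)
        fix x :: "real^'d" assume x: "norm x \<le> 1"
        have "\<bar>psi m th (W0 th) x\<bar> \<le> (\<Sum>i<m. \<bar>nt (fst (th i)) (snd (snd (th i))) (W0 th i) x\<bar>)"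
          unfolding psi_nt by (rule sum_abs)
        also have "\<dots> \<le> (\<Sum>i<m. r * c * ((d+1) * s)^3)"
        proof (rule sum_mono)
          fix i assume "i \<in> {..<m}"
          hence i: "i < m" by simp
          have "\<bar>nt (fst (th i)) (snd (snd (th i))) (W0 th i) x\<bar> \<le> \<bar>fst (th i)\<bar> * c * ((d+1) * s)^3"
            unfolding c_def by (rule nt_bound) (use w0' i x in auto)
          also have "\<dots> \<le> r * c * ((d+1) * s)^3" using ab i c0 d1 s0 by (intro mult_right_mono) auto
          finally show "\<bar>nt (fst (th i)) (snd (snd (th i))) (W0 th i) x\<bar> \<le> r * c * ((d+1) * s)^3" .
        qed
        also have "\<dots> = c*(d+1)^3 * (real m * r * s^3)" by (simp only: power_mult_distrib) (simp add: algebra_simps)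
        finally have p: "\<bar>psi m th (W0 th) x\<bar> \<le> c*(d+1)^3 * (real m * r * s^3)" .
        have xG: "x \<in> Gamma" unfolding Gamma_def using x by simp
        have "\<bar>f x\<bar> \<le> nf * (r * c * ((d+1) * s)^2)"
          using f_bound[OF m1 adm xG] cost unfolding r_def s_def M_def c_def d_def by simp
        also have "\<dots> = c*(d+1)^2 * (nf * r * s^2)" by (simp only: power_mult_distrib) (simp add: algebra_simps)
        finally have "\<bar>f x\<bar> \<le> c*(d+1)^2 * (nf * r * s^2)" .
        then show "\<bar>psi m th (sgd m th f \<eta> X js 0) x - f x\<bar> \<le> E0" using p unfolding E0_def by simp
      qed
      have main: "\<forall>X. (\<forall>n<N. X n \<in> Gamma) \<longrightarrow> E_sgd m th f \<eta> N T X \<le> C * \<epsilon>"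
      proof (intro allI impI)
        fix X :: "nat \<Rightarrow> real^'d" assume XG: "\<forall>n<N. X n \<in> Gamma"
        show "E_sgd m th f \<eta> N T X \<le> C * \<epsilon>"
        proof (rule E_sgd_bound[OF N1])
          show "0 \<le> C * \<epsilon>" using C0 e0 by simp
          show "\<forall>js\<in>{..<T} \<rightarrow>\<^sub>E {..<N}. \<forall>t<T. train_loss m th f N X (sgd m th f \<eta> X js t) \<le> C * \<epsilon>"
          proof (intro ballI allI impI)
            fix js t assume js: "js \<in> {..<T} \<rightarrow>\<^sub>E {..<N}" and t: "t < T"
            have jsN: "\<forall>t<T. js t < N" using js by auto
            have Xb: "\<forall>t<T. norm (X (js t)) \<le> 1" using XG jsN unfolding Gamma_def by auto
            have Kb: "\<forall>t\<le>T. \<forall>i<m. norm (sgd m th f \<eta> X js t i) \<le> K"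
            proof -
              have thE': "th \<in> {..<m} \<rightarrow>\<^sub>E Lambda al be m" using thE unfolding E_def .
              have "\<forall>t\<le>T. (\<forall>i<m. norm (sgd m th f \<eta> X js t i) \<le> K) \<and>
                 (\<forall>x\<in>Gamma. \<bar>psi m th (sgd m th f \<eta> X js t) x\<bar> \<le> K)"
                using mp[OF spec[OF mp[OF spec[OF bspec[OF noexp thE'], of X] XG]] jsN] .
              then show ?thesis by blast
            qed
            have w0: "\<forall>i<m. norm (sgd m th f \<eta> X js 0 i) + \<bar>snd (snd (th i))\<bar> \<le> (d+1) * s"
              using w0' by simp
            have cr: "\<forall>t\<le>T. \<forall>x::real^'d. norm x \<le> 1 \<longrightarrow> \<bar>psi m th (sgd m th f \<eta> X js t) x - f x\<bar> \<le> B"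
              unfolding B_def
              by (rule core[OF d_def c_def r0 s0 e0 e1 etap etam m1 c2p assms(1) nf0 A1 A4 ab bb w0 E0b E0_def P1 P2 Xb Kb])
            have "\<forall>n<N. \<bar>psi m th (sgd m th f \<eta> X js t) (X n) - f (X n)\<bar> \<le> B"
              using cr t XG unfolding Gamma_def by auto
            then have "train_loss m th f N X (sgd m th f \<eta> X js t) \<le> B^2" by (rule train_loss_bound[OF N1])
            then show "train_loss m th f N X (sgd m th f \<eta> X js t) \<le> C * \<epsilon>" using B2 by simp
          qed
        qed
      qed
      show "E_X_sgd m th f \<eta> N T D \<le> C * \<epsilon>"
        by (rule E_X_bound[OF Dp Ds Dae _ main]) (use C0 e0 in simp)
    qed
    qed
  qed
qed


end
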